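(* Let $F$ be a $C^1$ function and let $\vec\Phi$ be a (sufficiently regular) conformal immersion of a domain of $\mathbb R^2$ into $\mathbb R^3$ with conformal factor $\lambda$. (i) If $\vec\Phi$ is a critical point of $\mathcal W_F=\int F(H^2)\,d\mathrm{vol}_g$, then $$\mathrm{div}\Big[F(H^2)\nabla\vec\Phi+HF'(H^2)\nabla\vec n-\vec n\,\nabla\big(HF'(H^2)\big)\Big]=0.$$ (ii) If $\vec\Phi$ is a critical point of $\mathcal E_F=\int F(|A|^2)\,d\mathrm{vol}_g$, then, writing $F=F(|A|^2)$, $F'=F'(|A|^2)$, $$\mathrm{div}\Big[F\nabla\vec\Phi-2e^{-2\lambda}F'\sum_{j=1}^2(\nabla\vec n\cdot\partial_{x_j}\vec n)\,\partial_{x_j}\vec\Phi+2e^{-2\lambda}\vec n\,\big(\mathrm{div}(F'\nabla\vec n)\cdot\nabla\vec\Phi\big)\Big]=0.$$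
   Context: Conformal: $\partial_{x_i}\vec\Phi\cdot\partial_{x_j}\vec\Phi=e^{2\lambda}\delta_{ij}$. $\nabla,\mathrm{div}$ are flat operators in $(x_1,x_2)$. $\vec n$ is the unit normal, $H$ the scalar mean curvature with $\Delta\vec\Phi=2e^{2\lambda}H\vec n$, $|A|^2=e^{-2\lambda}|\nabla\vec n|^2$. $F'(s)=dF/ds$. In (ii), $\mathrm{div}(F'\nabla\vec n)\cdot\nabla\vec\Phi$ denotes the vector field $\big(\mathrm{div}(F'\nabla\vec n)\cdot\partial_{x_1}\vec\Phi,\ \mathrm{div}(F'\nabla\vec n)\cdot\partial_{x_2}\vec\Phi\big)$, and $\nabla\vec n\cdot\partial_{x_j}\vec n$ the vector field $(\partial_{x_1}\vec n\cdot\partial_{x_j}\vec n,\partial_{x_2}\vec n\cdot\partial_{x_j}\vec n)$. The equations hold in the sense of distributions. *)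

theory Defs
  imports "HOL-Analysis.Analysis" "HOL-Analysis.Cross3"
begin

definition pd :: "2 \<Rightarrow> (real^2 \<Rightarrow> 'b::real_normed_vector) \<Rightarrow> real^2 \<Rightarrow> 'b" where
  "pd i f p = frechet_derivative f (at p) (axis i 1)"

fun Ck :: "nat \<Rightarrow> (real^2) set \<Rightarrow> (real^2 \<Rightarrow> 'b::real_normed_vector) \<Rightarrow> bool" where
  "Ck 0 U f = continuous_on U f"
| "Ck (Suc k) U f = ((\<forall>p\<in>U. f differentiable (at p)) \<and> (\<forall>i. Ck k U (pd i f)))"

definition smooth_on :: "(real^2) set \<Rightarrow> (real^2 \<Rightarrow> 'b::real_normed_vector) \<Rightarrow> bool" where
  "smooth_on U f = (\<forall>k. Ck k U f)"

definition test_fn :: "(real^2) set \<Rightarrow> (real^2 \<Rightarrow> real) \<Rightarrow> bool" where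
  "test_fn U \<phi> = (smooth_on UNIV \<phi> \<and>
     (\<exists>K. compact K \<and> K \<subseteq> U \<and> (\<forall>p. p \<notin> K \<longrightarrow> \<phi> p = 0)))"

definition regd :: "(real^2) set \<Rightarrow> (real^2 \<Rightarrow> 'b::euclidean_space) \<Rightarrow> (real^2 \<Rightarrow> real) \<Rightarrow> 'b" where
  "regd U f = (\<lambda>\<phi>. integral U (\<lambda>p. \<phi> p *\<^sub>R f p))"

definition dpd :: "2 \<Rightarrow> ((real^2 \<Rightarrow> real) \<Rightarrow> 'b::real_normed_vector) \<Rightarrow> (real^2 \<Rightarrow> real) \<Rightarrow> 'b" where
  "dpd i T = (\<lambda>\<phi>. - T (pd i \<phi>))"

definition vmul :: "(real^2 \<Rightarrow> real^3) \<Rightarrow> ((real^2 \<Rightarrow> real) \<Rightarrow> real) \<Rightarrow> (real^2 \<Rightarrow> real) \<Rightarrow> real^3" where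
  "vmul a S = (\<lambda>\<phi>. \<chi> c. S (\<lambda>p. a p $ c * \<phi> p))"

definition vdot :: "((real^2 \<Rightarrow> real) \<Rightarrow> real^3) \<Rightarrow> (real^2 \<Rightarrow> real^3) \<Rightarrow> (real^2 \<Rightarrow> real) \<Rightarrow> real" where
  "vdot D v = (\<lambda>\<phi>. \<Sum>c\<in>UNIV. D (\<lambda>p. v p $ c * \<phi> p) $ c)"

definition gmat :: "(real^2 \<Rightarrow> real^3) \<Rightarrow> real^2 \<Rightarrow> real^2^2" where
  "gmat \<Psi> p = (\<chi> i j. pd i \<Psi> p \<bullet> pd j \<Psi> p)"

definition nrm :: "(real^2 \<Rightarrow> real^3) \<Rightarrow> real^2 \<Rightarrow> real^3" where
  "nrm \<Psi> p = (1 / norm (cross3 (pd 1 \<Psi> p) (pd 2 \<Psi> p))) *\<^sub>R cross3 (pd 1 \<Psi> p) (pd 2 \<Psi> p)"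

definition area :: "(real^2 \<Rightarrow> real^3) \<Rightarrow> real^2 \<Rightarrow> real" where
  "area \<Psi> p = norm (cross3 (pd 1 \<Psi> p) (pd 2 \<Psi> p))"

definition sff :: "(real^2 \<Rightarrow> real^3) \<Rightarrow> 2 \<Rightarrow> 2 \<Rightarrow> real^2 \<Rightarrow> real" where
  "sff \<Psi> i j p = pd i (pd j \<Psi>) p \<bullet> nrm \<Psi> p"

text \<open>Scalar mean curvature H = (1/2) g^{ij} h_ij (so Delta Phi = 2 e^{2 lambda} H n in conformal coordinates).\<close>
definition mcurv :: "(real^2 \<Rightarrow> real^3) \<Rightarrow> real^2 \<Rightarrow> real" where
  "mcurv \<Psi> p = (1/2) * (\<Sum>i\<in>UNIV. \<Sum>j\<in>UNIV. matrix_inv (gmat \<Psi> p) $ i $ j * sff \<Psi> i j p)"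

definition sqA :: "(real^2 \<Rightarrow> real^3) \<Rightarrow> real^2 \<Rightarrow> real" where
  "sqA \<Psi> p = (\<Sum>i\<in>UNIV. \<Sum>j\<in>UNIV. \<Sum>k\<in>UNIV. \<Sum>l\<in>UNIV.
      matrix_inv (gmat \<Psi> p) $ i $ k * matrix_inv (gmat \<Psi> p) $ j $ l * sff \<Psi> i j p * sff \<Psi> k l p)"

definition WF :: "(real \<Rightarrow> real) \<Rightarrow> (real^2 \<Rightarrow> real^3) \<Rightarrow> (real^2) set \<Rightarrow> real" where
  "WF F \<Psi> K = integral K (\<lambda>p. F ((mcurv \<Psi> p)\<^sup>2) * area \<Psi> p)"

definition EF :: "(real \<Rightarrow> real) \<Rightarrow> (real^2 \<Rightarrow> real^3) \<Rightarrow> (real^2) set \<Rightarrow> real" where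
  "EF F \<Psi> K = integral K (\<lambda>p. F (sqA \<Psi> p) * area \<Psi> p)"

definition critical :: "((real^2 \<Rightarrow> real^3) \<Rightarrow> (real^2) set \<Rightarrow> real) \<Rightarrow> (real^2) set \<Rightarrow> (real^2 \<Rightarrow> real^3) \<Rightarrow> bool" where
  "critical J U \<Phi> = (\<forall>w K. smooth_on UNIV w \<and> compact K \<and> K \<subseteq> U \<and> (\<forall>p. p \<notin> K \<longrightarrow> w p = 0) \<longrightarrow>
      ((\<lambda>t. J (\<lambda>p. \<Phi> p + t *\<^sub>R w p) K) has_real_derivative 0) (at 0))"

text \<open>(i): div [ F(H^2) grad Phi + H F'(H^2) grad n - n grad (H F'(H^2)) ].\<close>
definition div_W :: "(real^2) set \<Rightarrow> (real \<Rightarrow> real) \<Rightarrow> (real \<Rightarrow> real) \<Rightarrow> (real^2 \<Rightarrow> real^3) \<Rightarrow> (real^2 \<Rightarrow> real) \<Rightarrow> real^3" where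
  "div_W U F F' \<Phi> = (let H = mcurv \<Phi>; n = nrm \<Phi>; f = (\<lambda>p. H p * F' ((H p)\<^sup>2));
     V = (\<lambda>i \<phi>. regd U (\<lambda>p. F ((H p)\<^sup>2) *\<^sub>R pd i \<Phi> p + f p *\<^sub>R pd i n p) \<phi>
                 - vmul n (dpd i (regd U f)) \<phi>)
   in (\<lambda>\<phi>. \<Sum>i\<in>UNIV. dpd i (V i) \<phi>))"

text \<open>(ii): div [ F grad Phi - 2 e^{-2 lambda} F' sum_j (grad n . d_j n) d_j Phi
                 + 2 e^{-2 lambda} n (div(F' grad n) . grad Phi) ], F = F(|A|^2), F' = F'(|A|^2).\<close>
definition div_E :: "(real^2) set \<Rightarrow> (real \<Rightarrow> real) \<Rightarrow> (real \<Rightarrow> real) \<Rightarrow> (real^2 \<Rightarrow> real^3) \<Rightarrow> (real^2 \<Rightarrow> real) \<Rightarrow> (real^2 \<Rightarrow> real) \<Rightarrow> real^3" where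
  "div_E U F F' \<Phi> lam = (let A2 = sqA \<Phi>; n = nrm \<Phi>;
     D = (\<lambda>\<phi>. \<Sum>k\<in>UNIV. dpd k (regd U (\<lambda>p. F' (A2 p) *\<^sub>R pd k n p)) \<phi>);
     V = (\<lambda>i \<phi>. regd U (\<lambda>p. F (A2 p) *\<^sub>R pd i \<Phi> p
                  - (2 * exp (-2 * lam p) * F' (A2 p)) *\<^sub>R
                      (\<Sum>j\<in>UNIV. (pd i n p \<bullet> pd j n p) *\<^sub>R pd j \<Phi> p)) \<phi>
                 + vmul (\<lambda>p. (2 * exp (-2 * lam p)) *\<^sub>R n p) (vdot D (pd i \<Phi>)) \<phi>)
   in (\<lambda>\<phi>. \<Sum>i\<in>UNIV. dpd i (V i) \<phi>))"

end

theory Submission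
  imports Defs
begin


lemma pd_has: "(f has_derivative f') (at p) \<Longrightarrow> pd i f p = f' (axis i 1)"
  unfolding pd_def using frechet_derivative_at by metis

lemma pd_local:
  assumes "open S" "p \<in> S" "\<And>x. x \<in> S \<Longrightarrow> f x = g x"
  shows "pd i f p = pd i g p"
proof -
  have eq: "(f has_derivative f') (at p) \<longleftrightarrow> (g has_derivative f') (at p)" for f'
  proof
    assume "(f has_derivative f') (at p)"
    then show "(g has_derivative f') (at p)"
      by (rule has_derivative_transform_within_open[OF _ assms(1,2)]) (simp add: assms(3))
  next
    assume "(g has_derivative f') (at p)"
    then show "(f has_derivative f') (at p)"
      by (rule has_derivative_transform_within_open[OF _ assms(1,2)]) (simp add: assms(3))
  qed
  show ?thesis unfolding pd_def frechet_derivative_def eq ..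
qed

lemma fd: "f differentiable at p \<Longrightarrow> (f has_derivative (\<lambda>h. frechet_derivative f (at p) h)) (at p)"
  using frechet_derivative_works by (metis eta_contract_eq)

lemma pd_add: "f differentiable at p \<Longrightarrow> g differentiable at p \<Longrightarrow>
   pd i (\<lambda>x. f x + g x) p = pd i f p + pd i g p"
  by (subst pd_has[OF has_derivative_add[OF fd fd]]) (auto simp: pd_def)

lemma pd_diff: "f differentiable at p \<Longrightarrow> g differentiable at p \<Longrightarrow>
   pd i (\<lambda>x. f x - g x) p = pd i f p - pd i g p"
  by (subst pd_has[OF has_derivative_diff[OF fd fd]]) (auto simp: pd_def)

lemma pd_scaleR: "f differentiable at p \<Longrightarrow> g differentiable at p \<Longrightarrow>
   pd i (\<lambda>x. f x *\<^sub>R g x) p = f p *\<^sub>R pd i g p + pd i f p *\<^sub>R g p"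
  by (subst pd_has[OF has_derivative_scaleR[OF fd fd]]) (auto simp: pd_def)

lemma pd_mult: "f differentiable at p \<Longrightarrow> g differentiable at p \<Longrightarrow>
   pd i (\<lambda>x. f x * g x :: real) p = f p * pd i g p + pd i f p * g p"
  by (subst pd_has[OF has_derivative_mult[OF fd fd]]) (auto simp: pd_def)

lemma pd_inner: "f differentiable at p \<Longrightarrow> g differentiable at p \<Longrightarrow>
   pd i (\<lambda>x. f x \<bullet> g x) p = f p \<bullet> pd i g p + pd i f p \<bullet> g p"
  by (subst pd_has[OF has_derivative_inner[OF fd fd]]) (auto simp: pd_def)

lemma pd_const: "pd i (\<lambda>x. c) p = 0"
  by (subst pd_has[OF has_derivative_const]) simp

lemma pd_component: "f differentiable at p \<Longrightarrow> pd i (\<lambda>x. f x $ c) p = pd i f p $ c"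
proof -
  assume a: "f differentiable at p"
  have "((\<lambda>x. f x $ c) has_derivative (\<lambda>h. frechet_derivative f (at p) h $ c)) (at p)"
    using bounded_linear.has_derivative[OF bounded_linear_vec_nth fd[OF a]] .
  then show ?thesis by (subst pd_has) (auto simp: pd_def)
qed

lemma pd_scaleR_const: "f differentiable at p \<Longrightarrow> pd i (\<lambda>x. f x *\<^sub>R v) p = pd i f p *\<^sub>R v"
  by (subst pd_has[OF has_derivative_scaleR_left[OF fd]]) (auto simp: pd_def)

lemma pd_comp: "f differentiable at p \<Longrightarrow> (h has_real_derivative h') (at (f p)) \<Longrightarrow>
   pd i (\<lambda>x. h (f x)) p = h' * pd i f p"
proof -
  assume a: "f differentiable at p" and b: "(h has_real_derivative h') (at (f p))"
  have "((\<lambda>x. h (f x)) has_derivative (\<lambda>y. h' * frechet_derivative f (at p) y)) (at p)"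
    using has_derivative_compose[OF fd[OF a] b[unfolded has_field_derivative_def]] by (simp add: mult.commute)
  then show ?thesis by (subst pd_has) (auto simp: pd_def)
qed


lemma line_deriv:
  fixes g :: "real^2 \<Rightarrow> real"
  assumes "g differentiable at (a + s *\<^sub>R axis i 1)"
  shows "((\<lambda>s. g (a + s *\<^sub>R axis i 1)) has_real_derivative pd i g (a + s *\<^sub>R axis i 1)) (at s)"
proof -
  let ?x = "a + s *\<^sub>R axis i 1"
  have l: "((\<lambda>s. a + s *\<^sub>R axis i 1) has_derivative (\<lambda>h. h *\<^sub>R axis i 1)) (at s)"
    by (auto intro!: derivative_eq_intros)
  have "((\<lambda>s. g (a + s *\<^sub>R axis i 1)) has_derivative (\<lambda>h. frechet_derivative g (at ?x) (h *\<^sub>R axis i 1))) (at s)"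
    using has_derivative_compose[OF l fd[OF assms]] .
  moreover have "linear (frechet_derivative g (at ?x))"
    using fd[OF assms] has_derivative_linear by blast
  ultimately have "((\<lambda>s. g (a + s *\<^sub>R axis i 1)) has_derivative (\<lambda>h. h * frechet_derivative g (at ?x) (axis i 1))) (at s)"
    by (simp add: linear_scale)
  then have "((\<lambda>s. g (a + s *\<^sub>R axis i 1)) has_derivative (\<lambda>h. pd i g ?x * h)) (at s)"
    by (simp add: pd_def mult.commute)
  then show ?thesis unfolding has_field_derivative_def by simp
qed

lemma norm_two_axis: "norm (s *\<^sub>R axis i (1::real) + t *\<^sub>R axis j 1 :: real^2) \<le> \<bar>s\<bar> + \<bar>t\<bar>"
  using norm_triangle_ineq[of "s *\<^sub>R axis i (1::real)" "t *\<^sub>R axis j 1 :: real^2"]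
  by simp

lemma second_diff_mvt:
  fixes f :: "real^2 \<Rightarrow> real"
  assumes "ball p r \<subseteq> U" "\<And>x. x \<in> U \<Longrightarrow> f differentiable at x"
    "\<And>x. x \<in> U \<Longrightarrow> pd i f differentiable at x"
    "0 < h" "2 * h < r"
  shows "\<exists>s t. 0 < s \<and> s < h \<and> 0 < t \<and> t < h \<and>
    f (p + h *\<^sub>R axis i 1 + h *\<^sub>R axis j 1) - f (p + h *\<^sub>R axis i 1) - f (p + h *\<^sub>R axis j 1) + f p
     = h * h * pd j (pd i f) (p + s *\<^sub>R axis i 1 + t *\<^sub>R axis j 1)"
proof -
  have inb: "p + s *\<^sub>R axis i 1 + t *\<^sub>R axis j 1 \<in> U" if "0 \<le> s" "s \<le> h" "0 \<le> t" "t \<le> h" for s t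
  proof -
    have "norm (s *\<^sub>R axis i (1::real) + t *\<^sub>R axis j 1 :: real^2) < r"
      using norm_two_axis[of s i t j] that assms(5) by linarith
    moreover have "dist p (p + v) = norm v" for v :: "real^2" by (simp add: dist_norm norm_minus_commute)
    ultimately have "p + s *\<^sub>R axis i 1 + t *\<^sub>R axis j 1 \<in> ball p r"
      by (simp add: add.assoc)
    then show ?thesis using assms(1) by blast
  qed
  define \<phi> where "\<phi> s = f ((p + h *\<^sub>R axis j 1) + s *\<^sub>R axis i 1) - f (p + s *\<^sub>R axis i 1)" for s
  have d\<phi>: "(\<phi> has_real_derivative (pd i f ((p + h *\<^sub>R axis j 1) + s *\<^sub>R axis i 1) - pd i f (p + s *\<^sub>R axis i 1))) (at s)"
    if "0 \<le> s" "s \<le> h" for s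
    unfolding \<phi>_def
  proof (intro derivative_intros line_deriv)
    show "f differentiable at (p + h *\<^sub>R axis j 1 + s *\<^sub>R axis i 1)"
      using inb[of s h] that assms(2,4) by (simp add: add_ac)
    show "f differentiable at (p + s *\<^sub>R axis i 1)"
      using inb[of s 0] that assms(2,4) by simp
  qed
  obtain s where s: "0 < s" "s < h" "\<phi> h - \<phi> 0 = (h - 0) * (pd i f ((p + h *\<^sub>R axis j 1) + s *\<^sub>R axis i 1) - pd i f (p + s *\<^sub>R axis i 1))"
    using MVT2[OF assms(4) d\<phi>] by auto
  define \<psi> where "\<psi> t = pd i f ((p + s *\<^sub>R axis i 1) + t *\<^sub>R axis j 1)" for t
  have d\<psi>: "(\<psi> has_real_derivative pd j (pd i f) ((p + s *\<^sub>R axis i 1) + t *\<^sub>R axis j 1)) (at t)"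
    if "0 \<le> t" "t \<le> h" for t
    unfolding \<psi>_def using inb[of s t] that s assms(3) by (intro line_deriv) auto
  obtain t where t: "0 < t" "t < h" "\<psi> h - \<psi> 0 = (h - 0) * pd j (pd i f) ((p + s *\<^sub>R axis i 1) + t *\<^sub>R axis j 1)"
    using MVT2[OF assms(4) d\<psi>] by auto
  have "f (p + h *\<^sub>R axis i 1 + h *\<^sub>R axis j 1) - f (p + h *\<^sub>R axis i 1) - f (p + h *\<^sub>R axis j 1) + f p
      = \<phi> h - \<phi> 0" unfolding \<phi>_def by (simp add: add_ac)
  also have "\<dots> = h * (\<psi> h - \<psi> 0)" using s(3) unfolding \<psi>_def by (simp add: add_ac)
  also have "\<dots> = h * h * pd j (pd i f) (p + s *\<^sub>R axis i 1 + t *\<^sub>R axis j 1)" using t(3) by simp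
  finally show ?thesis using s t by blast
qed

lemma schwarz_real:
  fixes f :: "real^2 \<Rightarrow> real"
  assumes "open U" "p \<in> U" "\<And>x. x \<in> U \<Longrightarrow> f differentiable at x"
    "\<And>x i. x \<in> U \<Longrightarrow> pd i f differentiable at x"
    "\<And>i j. continuous_on U (pd i (pd j f))"
  shows "pd 1 (pd 2 f) p = pd 2 (pd 1 f) p"
proof (rule ccontr)
  assume ne: "pd 1 (pd 2 f) p \<noteq> pd 2 (pd 1 f) p"
  define e where "e = \<bar>pd 1 (pd 2 f) p - pd 2 (pd 1 f) p\<bar> / 2"
  have e: "e > 0" using ne by (simp add: e_def)
  obtain r where r: "r > 0" "ball p r \<subseteq> U" using assms(1,2) open_contains_ball by blast
  have c1: "isCont (pd 1 (pd 2 f)) p" and c2: "isCont (pd 2 (pd 1 f)) p"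
    using assms(1,2,5) continuous_on_interior interior_open by metis+
  obtain d1 where d1: "d1 > 0" "\<And>z. dist z p < d1 \<Longrightarrow> dist (pd 1 (pd 2 f) z) (pd 1 (pd 2 f) p) < e"
    using c1 e unfolding continuous_at_eps_delta by blast
  obtain d2 where d2: "d2 > 0" "\<And>z. dist z p < d2 \<Longrightarrow> dist (pd 2 (pd 1 f) z) (pd 2 (pd 1 f) p) < e"
    using c2 e unfolding continuous_at_eps_delta by blast
  define h where "h = min (r/3) (min (d1/3) (d2/3))"
  have h: "0 < h" "2 * h < r" "2 * h < d1" "2 * h < d2" using r d1 d2 by (auto simp: h_def)
  obtain s t where st: "0 < s" "s < h" "0 < t" "t < h"
    "f (p + h *\<^sub>R axis 1 1 + h *\<^sub>R axis 2 1) - f (p + h *\<^sub>R axis 1 1) - f (p + h *\<^sub>R axis 2 1) + f p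
     = h * h * pd 2 (pd 1 f) (p + s *\<^sub>R axis 1 1 + t *\<^sub>R axis 2 1)"
    using second_diff_mvt[OF r(2) assms(3) assms(4) h(1,2), of 1 2] by blast
  obtain s' t' where st': "0 < s'" "s' < h" "0 < t'" "t' < h"
    "f (p + h *\<^sub>R axis 2 1 + h *\<^sub>R axis 1 1) - f (p + h *\<^sub>R axis 2 1) - f (p + h *\<^sub>R axis 1 1) + f p
     = h * h * pd 1 (pd 2 f) (p + s' *\<^sub>R axis 2 1 + t' *\<^sub>R axis 1 1)"
    using second_diff_mvt[OF r(2) assms(3) assms(4) h(1,2), of 2 1] by blast
  have "h * h * pd 2 (pd 1 f) (p + s *\<^sub>R axis 1 1 + t *\<^sub>R axis 2 1) = h * h * pd 1 (pd 2 f) (p + s' *\<^sub>R axis 2 1 + t' *\<^sub>R axis 1 1)"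
  proof -
    have pe: "p + h *\<^sub>R axis 2 1 + h *\<^sub>R axis 1 1 = p + h *\<^sub>R axis 1 1 + h *\<^sub>R axis 2 1" by (simp add: add_ac)
    show ?thesis using st(5) st'(5)[unfolded pe] by linarith
  qed
  then have eq: "pd 2 (pd 1 f) (p + s *\<^sub>R axis 1 1 + t *\<^sub>R axis 2 1) = pd 1 (pd 2 f) (p + s' *\<^sub>R axis 2 1 + t' *\<^sub>R axis 1 1)"
    using h by (metis mult_cancel_left mult_eq_0_iff order_less_irrefl)
  have dd: "dist (p + v) p = norm v" for v :: "real^2" by (simp add: dist_norm)
  have n1: "dist (p + s *\<^sub>R axis 1 1 + t *\<^sub>R axis 2 1) p < d2"
    using norm_two_axis[of s 1 t 2] st h dd[of "s *\<^sub>R axis 1 1 + t *\<^sub>R axis 2 1"] by (simp add: add.assoc)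
  have n2: "dist (p + s' *\<^sub>R axis 2 1 + t' *\<^sub>R axis 1 1) p < d1"
    using norm_two_axis[of s' 2 t' 1] st' h dd[of "s' *\<^sub>R axis 2 1 + t' *\<^sub>R axis 1 1"] by (simp add: add.assoc)
  have "\<bar>pd 1 (pd 2 f) p - pd 2 (pd 1 f) p\<bar> < e + e"
    using d1(2)[OF n2] d2(2)[OF n1] eq by (simp add: dist_real_def)
  then show False by (simp add: e_def)
qed


lemma cont_int:
  fixes g :: "real^2 \<Rightarrow> 'b::euclidean_space"
  assumes "compact S" "continuous_on S g"
  shows "g integrable_on S"
proof -
  have "integrable lborel (\<lambda>x. indicator S x *\<^sub>R g x)"
    using borel_integrable_compact[OF assms] .
  from has_integral_integral_lborel[OF this]
  have "(\<lambda>x. indicator S x *\<^sub>R g x) integrable_on UNIV" by blast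
  moreover have "(\<lambda>x. indicator S x *\<^sub>R g x) = (\<lambda>x. if x \<in> S then g x else 0)"
    by (auto simp: indicator_def)
  ultimately show ?thesis using integrable_restrict_UNIV by metis
qed

lemma int_superset:
  fixes g :: "real^2 \<Rightarrow> 'b::euclidean_space"
  assumes "compact K" "K \<subseteq> U" "continuous_on K g" "\<And>x. x \<notin> K \<Longrightarrow> g x = 0"
  shows "g integrable_on U" "integral U g = integral K g"
proof -
  have "(g has_integral integral K g) K" using cont_int[OF assms(1,3)] by auto
  then have "(g has_integral integral K g) U" using has_integral_on_superset assms(2,4) by blast
  then show "g integrable_on U" "integral U g = integral K g" by auto
qed

lemma leibniz_compact:
  fixes f fx :: "real \<Rightarrow> real^2 \<Rightarrow> real"
  assumes S: "compact S" and d: "0 < \<delta>"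
    and der: "\<And>t x. t \<in> cball 0 \<delta> \<Longrightarrow> x \<in> S \<Longrightarrow> ((\<lambda>t. f t x) has_real_derivative fx t x) (at t)"
    and cfx: "continuous_on (cball 0 \<delta> \<times> S) (\<lambda>(t,x). fx t x)"
    and cf: "\<And>t. t \<in> cball 0 \<delta> \<Longrightarrow> continuous_on S (f t)"
  shows "((\<lambda>t. integral S (f t)) has_real_derivative integral S (fx 0)) (at 0)"
proof -
  have "continuous_on S (\<lambda>x. (\<lambda>(t,x). fx t x) (0, x))"
    by (rule continuous_on_compose2[OF cfx]) (auto intro!: continuous_intros simp: d less_imp_le)
  then have c0: "continuous_on S (fx 0)" by simp
  have if0: "fx 0 integrable_on S" using cont_int[OF S c0] .
  have ift: "f t integrable_on S" if "t \<in> cball 0 \<delta>" for t using cont_int[OF S cf[OF that]] .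
  define \<mu> where "\<mu> = integral S (\<lambda>_. 1::real)"
  have \<mu>: "\<mu> \<ge> 0" unfolding \<mu>_def
    by (rule integral_nonneg) (auto intro: cont_int[OF S] continuous_on_const)
  have i1: "(\<lambda>_. 1::real) integrable_on S" by (auto intro: cont_int[OF S] continuous_on_const)
  show ?thesis unfolding has_field_derivative_iff LIM_eq
  proof (intro allI impI)
    fix e' :: real assume e': "e' > 0"
    define e where "e = e' / (2 * (\<mu> + 1))"
    have e: "e > 0" using e' \<mu> by (simp add: e_def)
    have "(0::real) \<in> cball 0 \<delta>" using d by simp
    from continuous_on_prod_compactE[OF cfx S this e]
    obtain X0 where X0: "0 \<in> X0" "open X0"
      "\<forall>t\<in>X0 \<inter> cball 0 \<delta>. \<forall>x\<in>S. dist (fx t x) (fx 0 x) \<le> e" by auto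
    obtain s0 where s0: "s0 > 0" "ball 0 s0 \<subseteq> X0" using X0 open_contains_ball by blast
    define s where "s = min s0 \<delta>"
    have s: "s > 0" using s0 d by (simp add: s_def)
    show "\<exists>s>0. \<forall>t. t \<noteq> 0 \<and> norm (t - 0) < s \<longrightarrow>
        norm ((integral S (f t) - integral S (f 0)) / (t - 0) - integral S (fx 0)) < e'"
    proof (intro exI conjI allI impI)
      show "s > 0" by (rule s)
      fix t :: real assume t: "t \<noteq> 0 \<and> norm (t - 0) < s"
      have tin: "r \<in> X0 \<inter> cball 0 \<delta>" if "\<bar>r\<bar> \<le> \<bar>t\<bar>" for r
        using that t s0(2) by (auto simp: s_def subset_iff)
      have bd: "\<bar>f t x - f 0 x - t * fx 0 x\<bar> \<le> \<bar>t\<bar> * e" if x: "x \<in> S" for x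
      proof -
        have dd: "\<And>r. \<bar>r\<bar> \<le> \<bar>t\<bar> \<Longrightarrow> ((\<lambda>t. f t x) has_real_derivative fx r x) (at r)"
          using der tin x by auto
        have "\<exists>z. \<bar>z\<bar> \<le> \<bar>t\<bar> \<and> f t x - f 0 x = t * fx z x"
        proof (cases "t > 0")
          case True
          obtain z where "0 < z" "z < t" "f t x - f 0 x = (t - 0) * fx z x"
            using MVT2[OF True, of "\<lambda>t. f t x" "\<lambda>r. fx r x"] dd by force
          then show ?thesis by (intro exI[of _ z]) auto
        next
          case False
          then have tn: "t < 0" using t by auto
          obtain z where "t < z" "z < 0" "f 0 x - f t x = (0 - t) * fx z x"
            using MVT2[OF tn, of "\<lambda>t. f t x" "\<lambda>r. fx r x"] dd tn by force
          then show ?thesis by (intro exI[of _ z]) (auto simp: algebra_simps)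
        qed
        then obtain z where z: "\<bar>z\<bar> \<le> \<bar>t\<bar>" "f t x - f 0 x = t * fx z x" by blast
        have "\<bar>fx z x - fx 0 x\<bar> \<le> e" using X0(3) tin[OF z(1)] x by (auto simp: dist_real_def)
        then have "\<bar>t * (fx z x - fx 0 x)\<bar> \<le> \<bar>t\<bar> * e" by (simp add: abs_mult mult_left_mono)
        then show ?thesis using z(2) by (simp add: algebra_simps)
      qed
      have tc: "t \<in> cball 0 \<delta>" "(0::real) \<in> cball 0 \<delta>" using t d by (auto simp: s_def)
      have bb: "(\<lambda>x. t * fx 0 x) integrable_on S" using integrable_on_cmult_left[OF if0, of t] by simp
      have "integral S (f t) - integral S (f 0) - t * integral S (fx 0)
          = integral S (\<lambda>x. f t x - f 0 x - t * fx 0 x)"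
      proof -
        have a: "(\<lambda>x. f t x - f 0 x) integrable_on S" using ift[OF tc(1)] ift[OF tc(2)] by (rule integrable_diff)
        have b: "(\<lambda>x. t * fx 0 x) integrable_on S" using integrable_on_cmult_left[OF if0, of t] by simp
        show ?thesis using integral_diff[OF a b] integral_diff[OF ift[OF tc(1)] ift[OF tc(2)]] by simp
      qed
      also have "norm \<dots> \<le> integral S (\<lambda>_. \<bar>t\<bar> * e)"
        using bd ift[OF tc(1)] ift[OF tc(2)] if0 bb
        by (intro integral_norm_bound_integral)
           (auto intro!: integrable_diff integrable_on_cmult_left integrable_continuous
             intro: cont_int[OF S] continuous_on_const)
      also have "\<dots> = \<bar>t\<bar> * e * \<mu>" unfolding \<mu>_def
        using integral_mult_right[of S "\<bar>t\<bar> * e" "\<lambda>_. 1::real"] by simp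
      finally have *: "\<bar>integral S (f t) - integral S (f 0) - t * integral S (fx 0)\<bar> \<le> \<bar>t\<bar> * e * \<mu>"
        by simp
      have "\<bar>(integral S (f t) - integral S (f 0)) / t - integral S (fx 0)\<bar>
          = \<bar>integral S (f t) - integral S (f 0) - t * integral S (fx 0)\<bar> / \<bar>t\<bar>"
        using t by (simp add: field_simps flip: abs_divide)
      also have "\<dots> \<le> e * \<mu>" using * t by (simp add: divide_le_eq mult.commute mult.left_commute)
      also have "\<dots> < e'" using e' \<mu> by (simp add: e_def field_simps) (smt (verit) mult_nonneg_nonneg)
      finally show "norm ((integral S (f t) - integral S (f 0)) / (t - 0) - integral S (fx 0)) < e'"
        by simp
    qed
  qed
qed


lemma smooth_Ck: "smooth_on U f \<Longrightarrow> Ck k U f" by (simp add: smooth_on_def)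

lemma smooth_diff: "smooth_on U f \<Longrightarrow> p \<in> U \<Longrightarrow> f differentiable at p"
  using smooth_Ck[of U f 1] by simp

lemma smooth_pd: "smooth_on U f \<Longrightarrow> smooth_on U (pd i f)"
  unfolding smooth_on_def by (metis Ck.simps(2))

lemma smooth_cont: "smooth_on U f \<Longrightarrow> continuous_on U f"
  using smooth_Ck[of U f 0] by simp

lemma pd_cscale: "g differentiable at p \<Longrightarrow> pd i (\<lambda>x. c *\<^sub>R g x) p = c *\<^sub>R pd i g p"
  by (subst pd_has[OF has_derivative_scaleR_right[OF fd]]) (auto simp: pd_def)

lemma pd_cmult: "g differentiable at p \<Longrightarrow> pd i (\<lambda>x. c * g x :: real) p = c * pd i g p"
  by (subst pd_has[OF has_derivative_mult_right[OF fd]]) (auto simp: pd_def)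

lemma bb_cross: "bounded_bilinear cross3"
  using bilinear_cross bilinear_conv_bounded_bilinear by blast

lemma pd_cross: "f differentiable at p \<Longrightarrow> g differentiable at p \<Longrightarrow>
   pd i (\<lambda>x. cross3 (f x) (g x)) p = cross3 (f p) (pd i g p) + cross3 (pd i f p) (g p)"
  by (subst pd_has[OF bounded_bilinear.FDERIV[OF bb_cross fd fd]]) (auto simp: pd_def)

lemma diff_component: "f differentiable at p \<Longrightarrow> (\<lambda>x. f x $ c) differentiable at p"
  unfolding differentiable_def using bounded_linear.has_derivative[OF bounded_linear_vec_nth] by blast

lemma diff_scaleR_c: "f differentiable at p \<Longrightarrow> (\<lambda>x. f x *\<^sub>R v) differentiable at p"
  unfolding differentiable_def using has_derivative_scaleR_left by blast

lemma smooth_scaleR_const: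
  assumes "smooth_on UNIV \<phi>" shows "smooth_on UNIV (\<lambda>x. \<phi> x *\<^sub>R v)"
proof -
  have "smooth_on UNIV \<phi> \<longrightarrow> Ck k UNIV (\<lambda>x. \<phi> x *\<^sub>R v)" for k
  proof (induction k arbitrary: \<phi>)
    case 0
    then show ?case by (auto intro!: continuous_intros dest: smooth_cont)
  next
    case (Suc k)
    show ?case
    proof
      assume s: "smooth_on UNIV \<phi>"
      have "pd i (\<lambda>x. \<phi> x *\<^sub>R v) = (\<lambda>x. pd i \<phi> x *\<^sub>R v)" for i
        using s by (auto intro!: ext pd_scaleR_const smooth_diff)
      then show "Ck (Suc k) UNIV (\<lambda>x. \<phi> x *\<^sub>R v)"
        using s Suc.IH[rule_format, OF smooth_pd[OF s]] smooth_diff[OF s] by (auto intro!: diff_scaleR_c)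
    qed
  qed
  then show ?thesis using assms by (simp add: smooth_on_def)
qed

lemma schwarz_vec:
  fixes f :: "real^2 \<Rightarrow> real^3"
  assumes U: "open U" and s: "smooth_on U f" and p: "p \<in> U"
  shows "pd 1 (pd 2 f) p = pd 2 (pd 1 f) p"
proof -
  have "pd 1 (pd 2 f) p $ c = pd 2 (pd 1 f) p $ c" for c
  proof -
    define g where "g x = f x $ c" for x
    have pdg: "pd i g x = pd i f x $ c" if "x \<in> U" for i x
      unfolding g_def using pd_component[OF smooth_diff[OF s that]] .
    have pdpdg: "pd j (pd i g) x = pd j (pd i f) x $ c" if "x \<in> U" for i j x
    proof -
      have "pd j (pd i g) x = pd j (\<lambda>x. pd i f x $ c) x"
        using pd_local[OF U that, of "pd i g" "\<lambda>x. pd i f x $ c"] pdg by auto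
      also have "\<dots> = pd j (pd i f) x $ c"
        using pd_component[OF smooth_diff[OF smooth_pd[OF s] that]] .
      finally show ?thesis .
    qed
    have "pd 1 (pd 2 g) p = pd 2 (pd 1 g) p"
    proof (rule schwarz_real[OF U p])
      show "g differentiable at x" if "x \<in> U" for x
        unfolding g_def using smooth_diff[OF s that]
        by (rule diff_component)
      show "pd i g differentiable at x" if "x \<in> U" for x i
      proof -
        have "(\<lambda>x. pd i f x $ c) differentiable at x"
          using smooth_diff[OF smooth_pd[OF s] that]
          by (rule diff_component)
        then obtain D where "((\<lambda>x. pd i f x $ c) has_derivative D) (at x)" by (auto simp: differentiable_def)
        then have "(pd i g has_derivative D) (at x)"
          by (rule has_derivative_transform_within_open[OF _ U that]) (simp add: pdg)
        then show ?thesis by (auto simp: differentiable_def)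
      qed
      show "continuous_on U (pd i (pd j g))" for i j
      proof -
        have "continuous_on U (\<lambda>x. pd i (pd j f) x $ c)"
          using smooth_cont[OF smooth_pd[OF smooth_pd[OF s]]] by (intro continuous_intros)
        then show ?thesis using continuous_on_cong pdpdg by (metis (no_types, lifting))
      qed
    qed
    then show ?thesis using pdpdg[OF p] by simp
  qed
  then show ?thesis by (simp add: vec_eq_iff)
qed

lemma schwarz_scalar:
  fixes f :: "real^2 \<Rightarrow> real"
  assumes s: "smooth_on UNIV f"
  shows "pd 1 (pd 2 f) p = pd 2 (pd 1 f) p"
  by (rule schwarz_real[of UNIV]) (auto intro: smooth_diff smooth_cont smooth_pd s)


definition Dg :: "real^3 \<Rightarrow> real^3 \<Rightarrow> real" where
  "Dg X Y = (X \<bullet> X) * (Y \<bullet> Y) - (X \<bullet> Y) * (X \<bullet> Y)"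

definition Hj :: "real^3 \<Rightarrow> real^3 \<Rightarrow> (2 \<Rightarrow> 2 \<Rightarrow> real^3) \<Rightarrow> real" where
  "Hj X Y S = ((Y \<bullet> Y) * (S 1 1 \<bullet> cross3 X Y) - (X \<bullet> Y) * (S 1 2 \<bullet> cross3 X Y)
     - (X \<bullet> Y) * (S 2 1 \<bullet> cross3 X Y) + (X \<bullet> X) * (S 2 2 \<bullet> cross3 X Y)) / (2 * Dg X Y * norm (cross3 X Y))"

definition adj2 :: "real^3 \<Rightarrow> real^3 \<Rightarrow> 2 \<Rightarrow> 2 \<Rightarrow> real" where
  "adj2 X Y i j = (if i = 1 then (if j = 1 then Y \<bullet> Y else - (X \<bullet> Y)) else (if j = 1 then - (X \<bullet> Y) else X \<bullet> X))"

definition Aj :: "real^3 \<Rightarrow> real^3 \<Rightarrow> (2 \<Rightarrow> 2 \<Rightarrow> real^3) \<Rightarrow> real" where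
  "Aj X Y S = (\<Sum>i\<in>UNIV. \<Sum>j\<in>UNIV. \<Sum>k\<in>UNIV. \<Sum>l\<in>UNIV. adj2 X Y i k * adj2 X Y j l *
      (S i j \<bullet> cross3 X Y) * (S k l \<bullet> cross3 X Y)) / (Dg X Y * Dg X Y * (cross3 X Y \<bullet> cross3 X Y))"

lemma Dg_inner: "Dg X Y = cross3 X Y \<bullet> cross3 X Y"
  unfolding Dg_def by (simp add: cross3_simps)

lemma Dg_norm: "Dg X Y = norm (cross3 X Y) ^ 2"
  by (simp add: Dg_inner power2_norm_eq_inner)

lemma matrix_inv_eq:
  fixes A B :: "real^'n^'n"
  assumes "A ** B = mat 1" "B ** A = mat 1"
  shows "matrix_inv A = B"
proof -
  have ex: "\<exists>A'. A ** A' = mat 1 \<and> A' ** A = mat 1" using assms by blast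
  define C where "C = matrix_inv A"
  have C: "A ** C = mat 1" "C ** A = mat 1" using someI_ex[OF ex] unfolding C_def matrix_inv_def by auto
  have "C = C ** (A ** B)" using assms by simp
  also have "\<dots> = (C ** A) ** B" by (simp add: matrix_mul_assoc)
  also have "\<dots> = B" using C by simp
  finally show ?thesis unfolding C_def .
qed

lemma minv2:
  fixes M :: "real^2^2"
  assumes "M$1$1 * M$2$2 - M$1$2 * M$2$1 \<noteq> 0"
  shows "matrix_inv M = (\<chi> i j. (if i = 1 then (if j = 1 then M$2$2 else - M$1$2)
            else (if j = 1 then - M$2$1 else M$1$1)) / (M$1$1 * M$2$2 - M$1$2 * M$2$1))"
proof -
  have sq: "(M$1$1 * M$2$2 - M$1$2 * M$2$1)^2 > 0" using assms by simp
  show ?thesis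
    apply (rule matrix_inv_eq)
    using assms sq by (auto simp: matrix_matrix_mult_def vec_eq_iff sum_2 forall_2 mat_def field_simps power2_eq_square)
qed

lemma mcurv_jet:
  assumes "cross3 (pd 1 \<Psi> p) (pd 2 \<Psi> p) \<noteq> 0"
  shows "mcurv \<Psi> p = Hj (pd 1 \<Psi> p) (pd 2 \<Psi> p) (\<lambda>i j. pd i (pd j \<Psi>) p)"
proof -
  let ?X = "pd 1 \<Psi> p" and ?Y = "pd 2 \<Psi> p"
  have D: "Dg ?X ?Y \<noteq> 0" using assms by (simp add: Dg_norm)
  have n: "norm (cross3 ?X ?Y) \<noteq> 0" using assms by simp
  have gm: "gmat \<Psi> p $1$1 * gmat \<Psi> p $2$2 - gmat \<Psi> p $1$2 * gmat \<Psi> p $2$1 = Dg ?X ?Y"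
    by (simp add: gmat_def Dg_def inner_commute)
  show ?thesis
    unfolding mcurv_def minv2[of "gmat \<Psi> p", unfolded gm, OF D] sff_def nrm_def Hj_def
    using D n by (simp add: sum_2 gmat_def field_simps inner_commute)
qed

lemma sqA_jet:
  assumes "cross3 (pd 1 \<Psi> p) (pd 2 \<Psi> p) \<noteq> 0"
  shows "sqA \<Psi> p = Aj (pd 1 \<Psi> p) (pd 2 \<Psi> p) (\<lambda>i j. pd i (pd j \<Psi>) p)"
proof -
  let ?X = "pd 1 \<Psi> p" and ?Y = "pd 2 \<Psi> p"
  have D: "Dg ?X ?Y \<noteq> 0" using assms by (simp add: Dg_norm)
  have n: "norm (cross3 ?X ?Y) \<noteq> 0" using assms by simp
  have nn: "cross3 ?X ?Y \<bullet> cross3 ?X ?Y = norm (cross3 ?X ?Y) * norm (cross3 ?X ?Y)"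
    by (simp add: power2_norm_eq_inner[symmetric] power2_eq_square)
  have gm: "gmat \<Psi> p $1$1 * gmat \<Psi> p $2$2 - gmat \<Psi> p $1$2 * gmat \<Psi> p $2$1 = Dg ?X ?Y"
    by (simp add: gmat_def Dg_def inner_commute)
  show ?thesis
    unfolding sqA_def minv2[of "gmat \<Psi> p", unfolded gm, OF D] sff_def nrm_def Aj_def nn
    using D n by (simp add: sum_2 gmat_def adj2_def field_simps inner_commute)
qed


lemma vd_aff: "((\<lambda>t. X + t *\<^sub>R V) has_vector_derivative V) (at t)"
  by (auto intro!: derivative_eq_intros)

lemma vd_inner:
  fixes f g :: "real \<Rightarrow> 'a::real_inner"
  assumes "(f has_vector_derivative f') (at t)" "(g has_vector_derivative g') (at t)"
  shows "((\<lambda>t. f t \<bullet> g t) has_real_derivative (f t \<bullet> g' + f' \<bullet> g t)) (at t)"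
proof -
  have "((\<lambda>t. f t \<bullet> g t) has_derivative (\<lambda>h. f t \<bullet> (h *\<^sub>R g') + (h *\<^sub>R f') \<bullet> g t)) (at t)"
    using has_derivative_inner[OF assms(1)[unfolded has_vector_derivative_def] assms(2)[unfolded has_vector_derivative_def]] .
  then show ?thesis unfolding has_field_derivative_def
    by (rule has_derivative_eq_rhs) (auto simp: algebra_simps)
qed

lemma vd_cross:
  assumes "(f has_vector_derivative f') (at t)" "(g has_vector_derivative g') (at t)"
  shows "((\<lambda>t. cross3 (f t) (g t)) has_vector_derivative (cross3 (f t) g' + cross3 f' (g t))) (at t)"
proof -
  have "((\<lambda>t. cross3 (f t) (g t)) has_derivative (\<lambda>h. cross3 (f t) (h *\<^sub>R g') + cross3 (h *\<^sub>R f') (g t))) (at t)"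
    using bounded_bilinear.FDERIV[OF bb_cross assms(1)[unfolded has_vector_derivative_def] assms(2)[unfolded has_vector_derivative_def]] .
  then show ?thesis unfolding has_vector_derivative_def
    by (rule has_derivative_eq_rhs) (auto simp: cross_mult_left cross_mult_right scaleR_right_distrib)
qed

lemma DERIV_norm3:
  fixes f :: "real \<Rightarrow> real^3"
  assumes "(f has_vector_derivative f') (at t)" "f t \<noteq> 0"
  shows "((\<lambda>t. norm (f t)) has_real_derivative (f t \<bullet> f') / norm (f t)) (at t)"
proof -
  have p: "0 < f t \<bullet> f t" using assms(2) by simp
  have "((\<lambda>t. sqrt (f t \<bullet> f t)) has_real_derivative (inverse (sqrt (f t \<bullet> f t)) / 2) * (f t \<bullet> f' + f' \<bullet> f t)) (at t)"
    by (rule DERIV_chain2[OF DERIV_real_sqrt[OF p] vd_inner[OF assms(1) assms(1)]])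
  moreover have "(\<lambda>t. sqrt (f t \<bullet> f t)) = (\<lambda>t. norm (f t))" by (simp add: norm_eq_sqrt_inner)
  moreover have "(inverse (sqrt (f t \<bullet> f t)) / 2) * (f t \<bullet> f' + f' \<bullet> f t) = (f t \<bullet> f') / norm (f t)"
  proof -
    have nn: "norm (f t) = sqrt (f t \<bullet> f t)" by (rule norm_eq_sqrt_inner)
    have ic: "f' \<bullet> f t = f t \<bullet> f'" by (rule inner_commute)
    have aux: "inverse s / 2 * (x + x) = x / s" for s x :: real
      by (metis (no_types, lifting) divide_inverse_commute field_sum_of_halves mult.commute ring_class.ring_distribs(1))
    show ?thesis unfolding ic nn by (rule aux)
  qed
  ultimately show ?thesis by simp
qed

definition Hs :: "real \<Rightarrow> real \<Rightarrow> real \<Rightarrow> real \<Rightarrow> real \<Rightarrow> real \<Rightarrow> real \<Rightarrow> real \<Rightarrow> real" where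
  "Hs a b c b11 b12 b21 b22 r = (c * b11 - b * b12 - b * b21 + a * b22) / (2 * (a * c - b * b) * r)"

definition HsD :: "real \<Rightarrow> real \<Rightarrow> real \<Rightarrow> real \<Rightarrow> real \<Rightarrow> real \<Rightarrow> real \<Rightarrow> real \<Rightarrow>
   real \<Rightarrow> real \<Rightarrow> real \<Rightarrow> real \<Rightarrow> real \<Rightarrow> real \<Rightarrow> real \<Rightarrow> real \<Rightarrow> real" where
  "HsD a b c b11 b12 b21 b22 r a' b' c' b11' b12' b21' b22' r' =
    ((c' * b11 + c * b11' - (b' * b12 + b * b12') - (b' * b21 + b * b21') + (a' * b22 + a * b22'))
       * (2 * (a * c - b * b) * r)
     - (c * b11 - b * b12 - b * b21 + a * b22) * (2 * ((a' * c + a * c' - (b' * b + b * b')) * r + (a * c - b * b) * r')))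
    / (2 * (a * c - b * b) * r) ^ 2"

lemma Hs_deriv:
  assumes "(a has_real_derivative a') (at t)" "(b has_real_derivative b') (at t)" "(c has_real_derivative c') (at t)"
    "(b11 has_real_derivative b11') (at t)" "(b12 has_real_derivative b12') (at t)"
    "(b21 has_real_derivative b21') (at t)" "(b22 has_real_derivative b22') (at t)"
    "(r has_real_derivative r') (at t)" "a t * c t - b t * b t \<noteq> 0" "r t \<noteq> 0"
  shows "((\<lambda>t. Hs (a t) (b t) (c t) (b11 t) (b12 t) (b21 t) (b22 t) (r t)) has_real_derivative
     HsD (a t) (b t) (c t) (b11 t) (b12 t) (b21 t) (b22 t) (r t) a' b' c' b11' b12' b21' b22' r') (at t)"
  unfolding Hs_def HsD_def
  apply (rule DERIV_cong)
   apply (rule derivative_intros assms)+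
  using assms(9,10) apply simp
  apply (simp only: power2_eq_square)
  apply (rule arg_cong2[where f="(/)"])
   apply (simp add: algebra_simps)
  apply (simp add: algebra_simps)
  done

definition ad :: "real \<Rightarrow> real \<Rightarrow> real \<Rightarrow> 2 \<Rightarrow> 2 \<Rightarrow> real" where
  "ad a b c i j = (if i = 1 then (if j = 1 then c else - b) else (if j = 1 then - b else a))"

definition Qs :: "real \<Rightarrow> real \<Rightarrow> real \<Rightarrow> (2 \<Rightarrow> 2 \<Rightarrow> real) \<Rightarrow> real" where
  "Qs a b c \<beta> = (\<Sum>i\<in>UNIV. \<Sum>j\<in>UNIV. \<Sum>k\<in>UNIV. \<Sum>l\<in>UNIV. ad a b c i k * ad a b c j l * \<beta> i j * \<beta> k l)"

definition QsD :: "real \<Rightarrow> real \<Rightarrow> real \<Rightarrow> (2 \<Rightarrow> 2 \<Rightarrow> real) \<Rightarrow> real \<Rightarrow> real \<Rightarrow> real \<Rightarrow> (2 \<Rightarrow> 2 \<Rightarrow> real) \<Rightarrow> real" where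
  "QsD a b c \<beta> a' b' c' \<beta>' = (\<Sum>i\<in>UNIV. \<Sum>j\<in>UNIV. \<Sum>k\<in>UNIV. \<Sum>l\<in>UNIV.
     ad a' b' c' i k * ad a b c j l * \<beta> i j * \<beta> k l + ad a b c i k * ad a' b' c' j l * \<beta> i j * \<beta> k l
     + ad a b c i k * ad a b c j l * \<beta>' i j * \<beta> k l + ad a b c i k * ad a b c j l * \<beta> i j * \<beta>' k l)"

lemma ad_deriv:
  assumes "(a has_real_derivative a') (at t)" "(b has_real_derivative b') (at t)" "(c has_real_derivative c') (at t)"
  shows "((\<lambda>t. ad (a t) (b t) (c t) i j) has_real_derivative ad a' b' c' i j) (at t)"
  unfolding ad_def using assms by (auto intro!: derivative_intros)

lemma Qs_deriv:
  assumes "(a has_real_derivative a') (at t)" "(b has_real_derivative b') (at t)" "(c has_real_derivative c') (at t)"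
    "\<And>i j. ((\<lambda>t. \<beta> t i j) has_real_derivative \<beta>' i j) (at t)"
  shows "((\<lambda>t. Qs (a t) (b t) (c t) (\<beta> t)) has_real_derivative QsD (a t) (b t) (c t) (\<beta> t) a' b' c' \<beta>') (at t)"
  unfolding Qs_def QsD_def
  apply (rule DERIV_sum)+
  apply (rule DERIV_cong)
   apply (rule DERIV_mult ad_deriv assms)+
  apply (simp add: algebra_simps)
  done

definition As :: "real \<Rightarrow> real \<Rightarrow> real \<Rightarrow> (2 \<Rightarrow> 2 \<Rightarrow> real) \<Rightarrow> real \<Rightarrow> real" where
  "As a b c \<beta> q = Qs a b c \<beta> / ((a * c - b * b) * (a * c - b * b) * q)"

definition AsD :: "real \<Rightarrow> real \<Rightarrow> real \<Rightarrow> (2 \<Rightarrow> 2 \<Rightarrow> real) \<Rightarrow> real \<Rightarrow> real \<Rightarrow> real \<Rightarrow> real \<Rightarrow> (2 \<Rightarrow> 2 \<Rightarrow> real) \<Rightarrow> real \<Rightarrow> real" where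
  "AsD a b c \<beta> q a' b' c' \<beta>' q' =
     (QsD a b c \<beta> a' b' c' \<beta>' * ((a * c - b * b) * (a * c - b * b) * q)
      - Qs a b c \<beta> * ((2 * (a * c - b * b) * (a' * c + a * c' - (b' * b + b * b'))) * q
            + (a * c - b * b) * (a * c - b * b) * q'))
     / ((a * c - b * b) * (a * c - b * b) * q) ^ 2"

lemma As_deriv:
  assumes "(a has_real_derivative a') (at t)" "(b has_real_derivative b') (at t)" "(c has_real_derivative c') (at t)"
    "\<And>i j. ((\<lambda>t. \<beta> t i j) has_real_derivative \<beta>' i j) (at t)"
    "(q has_real_derivative q') (at t)" "a t * c t - b t * b t \<noteq> 0" "q t \<noteq> 0"
  shows "((\<lambda>t. As (a t) (b t) (c t) (\<beta> t) (q t)) has_real_derivative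
      AsD (a t) (b t) (c t) (\<beta> t) (q t) a' b' c' \<beta>' q') (at t)"
  unfolding As_def AsD_def
  apply (rule DERIV_cong)
   apply (rule DERIV_divide Qs_deriv DERIV_mult DERIV_diff assms)+
  using assms(6,7) apply simp
  apply (simp only: power2_eq_square)
  apply (rule arg_cong2[where f="(/)"])
   apply (simp add: algebra_simps)
  apply (simp add: algebra_simps)
  done

lemma Hj_Hs: "Hj X Y S = Hs (X \<bullet> X) (X \<bullet> Y) (Y \<bullet> Y) (S 1 1 \<bullet> cross3 X Y) (S 1 2 \<bullet> cross3 X Y)
   (S 2 1 \<bullet> cross3 X Y) (S 2 2 \<bullet> cross3 X Y) (norm (cross3 X Y))"
  unfolding Hj_def Hs_def Dg_def by simp

lemma Aj_As: "Aj X Y S = As (X \<bullet> X) (X \<bullet> Y) (Y \<bullet> Y) (\<lambda>i j. S i j \<bullet> cross3 X Y) (cross3 X Y \<bullet> cross3 X Y)"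
proof -
  have "adj2 X Y = ad (X \<bullet> X) (X \<bullet> Y) (Y \<bullet> Y)" by (auto simp: adj2_def ad_def fun_eq_iff)
  then show ?thesis unfolding Aj_def As_def Qs_def Dg_def by simp
qed

definition GW :: "(real \<Rightarrow> real) \<Rightarrow> (real \<Rightarrow> real) \<Rightarrow> real^3 \<Rightarrow> real^3 \<Rightarrow> (2 \<Rightarrow> 2 \<Rightarrow> real^3)
   \<Rightarrow> real^3 \<Rightarrow> real^3 \<Rightarrow> (2 \<Rightarrow> 2 \<Rightarrow> real^3) \<Rightarrow> real \<Rightarrow> real" where
  "GW F F' X Y S X' Y' S' t = (let Xt = X + t *\<^sub>R X'; Yt = Y + t *\<^sub>R Y'; St = (\<lambda>i j. S i j + t *\<^sub>R S' i j);
     N = cross3 Xt Yt; N' = cross3 Xt Y' + cross3 X' Yt; r = norm N; r' = (N \<bullet> N') / r;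
     H = Hs (Xt \<bullet> Xt) (Xt \<bullet> Yt) (Yt \<bullet> Yt) (St 1 1 \<bullet> N) (St 1 2 \<bullet> N) (St 2 1 \<bullet> N) (St 2 2 \<bullet> N) r;
     H' = HsD (Xt \<bullet> Xt) (Xt \<bullet> Yt) (Yt \<bullet> Yt) (St 1 1 \<bullet> N) (St 1 2 \<bullet> N) (St 2 1 \<bullet> N) (St 2 2 \<bullet> N) r
       (Xt \<bullet> X' + X' \<bullet> Xt) (Xt \<bullet> Y' + X' \<bullet> Yt) (Yt \<bullet> Y' + Y' \<bullet> Yt)
       (St 1 1 \<bullet> N' + S' 1 1 \<bullet> N) (St 1 2 \<bullet> N' + S' 1 2 \<bullet> N) (St 2 1 \<bullet> N' + S' 2 1 \<bullet> N)
       (St 2 2 \<bullet> N' + S' 2 2 \<bullet> N) r'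
   in F' (H\<^sup>2) * (2 * H * H') * r + F (H\<^sup>2) * r')"

definition GE :: "(real \<Rightarrow> real) \<Rightarrow> (real \<Rightarrow> real) \<Rightarrow> real^3 \<Rightarrow> real^3 \<Rightarrow> (2 \<Rightarrow> 2 \<Rightarrow> real^3)
   \<Rightarrow> real^3 \<Rightarrow> real^3 \<Rightarrow> (2 \<Rightarrow> 2 \<Rightarrow> real^3) \<Rightarrow> real \<Rightarrow> real" where
  "GE F F' X Y S X' Y' S' t = (let Xt = X + t *\<^sub>R X'; Yt = Y + t *\<^sub>R Y'; St = (\<lambda>i j. S i j + t *\<^sub>R S' i j);
     N = cross3 Xt Yt; N' = cross3 Xt Y' + cross3 X' Yt; r = norm N; r' = (N \<bullet> N') / r;
     A = As (Xt \<bullet> Xt) (Xt \<bullet> Yt) (Yt \<bullet> Yt) (\<lambda>i j. St i j \<bullet> N) (N \<bullet> N);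
     A' = AsD (Xt \<bullet> Xt) (Xt \<bullet> Yt) (Yt \<bullet> Yt) (\<lambda>i j. St i j \<bullet> N) (N \<bullet> N)
       (Xt \<bullet> X' + X' \<bullet> Xt) (Xt \<bullet> Y' + X' \<bullet> Yt) (Yt \<bullet> Y' + Y' \<bullet> Yt)
       (\<lambda>i j. St i j \<bullet> N' + S' i j \<bullet> N) (N \<bullet> N' + N' \<bullet> N)
   in F' A * A' * r + F A * r')"

lemma GW_deriv:
  assumes F: "\<And>s. (F has_real_derivative F' s) (at s)"
    and N: "cross3 (X + t *\<^sub>R X') (Y + t *\<^sub>R Y') \<noteq> 0"
  shows "((\<lambda>t. F ((Hj (X + t *\<^sub>R X') (Y + t *\<^sub>R Y') (\<lambda>i j. S i j + t *\<^sub>R S' i j))\<^sup>2)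
      * norm (cross3 (X + t *\<^sub>R X') (Y + t *\<^sub>R Y'))) has_real_derivative GW F F' X Y S X' Y' S' t) (at t)"
proof -
  note aff = vd_aff
  note cr = vd_cross[OF aff aff]
  have D: "(X + t *\<^sub>R X') \<bullet> (X + t *\<^sub>R X') * ((Y + t *\<^sub>R Y') \<bullet> (Y + t *\<^sub>R Y'))
      - (X + t *\<^sub>R X') \<bullet> (Y + t *\<^sub>R Y') * ((X + t *\<^sub>R X') \<bullet> (Y + t *\<^sub>R Y')) \<noteq> 0"
    using N Dg_norm[of "X + t *\<^sub>R X'" "Y + t *\<^sub>R Y'"] by (simp add: Dg_def)
  have r: "norm (cross3 (X + t *\<^sub>R X') (Y + t *\<^sub>R Y')) \<noteq> 0" using N by simp
  have H: "((\<lambda>t. Hj (X + t *\<^sub>R X') (Y + t *\<^sub>R Y') (\<lambda>i j. S i j + t *\<^sub>R S' i j)) has_real_derivative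
     (let Xt = X + t *\<^sub>R X'; Yt = Y + t *\<^sub>R Y'; St = (\<lambda>i j. S i j + t *\<^sub>R S' i j);
     N = cross3 Xt Yt; N' = cross3 Xt Y' + cross3 X' Yt; r = norm N; r' = (N \<bullet> N') / r
     in HsD (Xt \<bullet> Xt) (Xt \<bullet> Yt) (Yt \<bullet> Yt) (St 1 1 \<bullet> N) (St 1 2 \<bullet> N) (St 2 1 \<bullet> N) (St 2 2 \<bullet> N) r
       (Xt \<bullet> X' + X' \<bullet> Xt) (Xt \<bullet> Y' + X' \<bullet> Yt) (Yt \<bullet> Y' + Y' \<bullet> Yt)
       (St 1 1 \<bullet> N' + S' 1 1 \<bullet> N) (St 1 2 \<bullet> N' + S' 1 2 \<bullet> N) (St 2 1 \<bullet> N' + S' 2 1 \<bullet> N)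
       (St 2 2 \<bullet> N' + S' 2 2 \<bullet> N) r')) (at t)"
    unfolding Hj_Hs Let_def
    by (rule Hs_deriv[OF vd_inner[OF aff aff] vd_inner[OF aff aff] vd_inner[OF aff aff]
          vd_inner[OF aff cr] vd_inner[OF aff cr] vd_inner[OF aff cr] vd_inner[OF aff cr]
          DERIV_norm3[OF cr N] D r])
  have R: "((\<lambda>t. norm (cross3 (X + t *\<^sub>R X') (Y + t *\<^sub>R Y'))) has_real_derivative
     (cross3 (X + t *\<^sub>R X') (Y + t *\<^sub>R Y') \<bullet> (cross3 (X + t *\<^sub>R X') Y' + cross3 X' (Y + t *\<^sub>R Y')))
       / norm (cross3 (X + t *\<^sub>R X') (Y + t *\<^sub>R Y'))) (at t)"
    by (rule DERIV_norm3[OF cr N])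
  show ?thesis
    apply (rule DERIV_cong)
     apply (rule DERIV_mult DERIV_chain2[OF F] DERIV_power H R)+
    apply (simp add: GW_def Let_def Hj_Hs algebra_simps)
    done
qed

lemma GE_deriv:
  assumes F: "\<And>s. (F has_real_derivative F' s) (at s)"
    and N: "cross3 (X + t *\<^sub>R X') (Y + t *\<^sub>R Y') \<noteq> 0"
  shows "((\<lambda>t. F (Aj (X + t *\<^sub>R X') (Y + t *\<^sub>R Y') (\<lambda>i j. S i j + t *\<^sub>R S' i j))
      * norm (cross3 (X + t *\<^sub>R X') (Y + t *\<^sub>R Y'))) has_real_derivative GE F F' X Y S X' Y' S' t) (at t)"
proof -
  note aff = vd_aff
  note cr = vd_cross[OF aff aff]
  have D: "(X + t *\<^sub>R X') \<bullet> (X + t *\<^sub>R X') * ((Y + t *\<^sub>R Y') \<bullet> (Y + t *\<^sub>R Y'))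
      - (X + t *\<^sub>R X') \<bullet> (Y + t *\<^sub>R Y') * ((X + t *\<^sub>R X') \<bullet> (Y + t *\<^sub>R Y')) \<noteq> 0"
    using N Dg_norm[of "X + t *\<^sub>R X'" "Y + t *\<^sub>R Y'"] by (simp add: Dg_def)
  have q: "cross3 (X + t *\<^sub>R X') (Y + t *\<^sub>R Y') \<bullet> cross3 (X + t *\<^sub>R X') (Y + t *\<^sub>R Y') \<noteq> 0" using N by simp
  have A: "((\<lambda>t. Aj (X + t *\<^sub>R X') (Y + t *\<^sub>R Y') (\<lambda>i j. S i j + t *\<^sub>R S' i j)) has_real_derivative
     (let Xt = X + t *\<^sub>R X'; Yt = Y + t *\<^sub>R Y'; St = (\<lambda>i j. S i j + t *\<^sub>R S' i j);
     N = cross3 Xt Yt; N' = cross3 Xt Y' + cross3 X' Yt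
     in AsD (Xt \<bullet> Xt) (Xt \<bullet> Yt) (Yt \<bullet> Yt) (\<lambda>i j. St i j \<bullet> N) (N \<bullet> N)
       (Xt \<bullet> X' + X' \<bullet> Xt) (Xt \<bullet> Y' + X' \<bullet> Yt) (Yt \<bullet> Y' + Y' \<bullet> Yt)
       (\<lambda>i j. St i j \<bullet> N' + S' i j \<bullet> N) (N \<bullet> N' + N' \<bullet> N))) (at t)"
    unfolding Aj_As Let_def
    by (rule As_deriv[OF vd_inner[OF aff aff] vd_inner[OF aff aff] vd_inner[OF aff aff]
          vd_inner[OF aff cr] vd_inner[OF cr cr] D q])
  have R: "((\<lambda>t. norm (cross3 (X + t *\<^sub>R X') (Y + t *\<^sub>R Y'))) has_real_derivative
     (cross3 (X + t *\<^sub>R X') (Y + t *\<^sub>R Y') \<bullet> (cross3 (X + t *\<^sub>R X') Y' + cross3 X' (Y + t *\<^sub>R Y')))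
       / norm (cross3 (X + t *\<^sub>R X') (Y + t *\<^sub>R Y'))) (at t)"
    by (rule DERIV_norm3[OF cr N])
  show ?thesis
    apply (rule DERIV_cong)
     apply (rule DERIV_mult DERIV_chain2[OF F] A R)+
    apply (simp add: GE_def Let_def Aj_As algebra_simps)
    done
qed


lemma cross_cross_left: "cross3 (cross3 a b) c = (a \<bullet> c) *\<^sub>R b - (b \<bullet> c) *\<^sub>R a"
  by (simp add: cross3_simps forall_3)

lemma cross_zero_perp:
  assumes "w \<bullet> X = 0" "w \<bullet> Y = 0" "w \<bullet> cross3 X Y = 0" "cross3 X Y \<noteq> 0"
  shows "w = 0"
proof -
  have "cross3 (cross3 X Y) w = 0" using assms by (simp add: cross_cross_left inner_commute)
  then have "(norm (cross3 (cross3 X Y) w))\<^sup>2 + (cross3 X Y \<bullet> w)\<^sup>2 = 0" using assms(3) by (simp add: inner_commute)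
  then have "(norm (cross3 X Y) * norm w)\<^sup>2 = 0" using norm_cross_dot by metis
  then show ?thesis using assms(4) by simp
qed

locale frame =
  fixes X Y :: "real^3" and E :: real
  assumes XX: "X \<bullet> X = E" and YY: "Y \<bullet> Y = E" and XY: "X \<bullet> Y = 0" and Epos: "E > 0"
begin

definition "nv = (1 / E) *\<^sub>R cross3 X Y"

lemma NN: "cross3 X Y \<bullet> cross3 X Y = E * E"
  using Dg_inner[of X Y] by (simp add: Dg_def XX YY XY)

lemma normN: "norm (cross3 X Y) = E"
proof -
  have "(norm (cross3 X Y))^2 = E^2" unfolding power2_norm_eq_inner NN by (simp add: power2_eq_square)
  then show ?thesis using Epos by (simp add: power2_eq_iff_nonneg)
qed

lemma N_nz: "cross3 X Y \<noteq> 0" using NN Epos by auto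

lemma XY_cross: "cross3 X Y = E *\<^sub>R nv" using Epos by (simp add: nv_def)
lemma YX_cross: "cross3 Y X = - (E *\<^sub>R nv)" using XY_cross cross_skew by metis
lemma nX: "nv \<bullet> X = 0" "X \<bullet> nv = 0" by (simp_all add: nv_def dot_cross_self inner_commute)
lemma nY: "nv \<bullet> Y = 0" "Y \<bullet> nv = 0" by (simp_all add: nv_def dot_cross_self inner_commute)
lemma nn: "nv \<bullet> nv = 1" using NN Epos by (simp add: nv_def)
lemma YX: "Y \<bullet> X = 0" using XY by (simp add: inner_commute)
lemma nv_cross_X: "cross3 nv X = Y"
  using Epos by (simp add: nv_def cross_mult_left cross_cross_left XX YX)
lemma X_cross_nv: "cross3 X nv = - Y" using nv_cross_X cross_skew by metis
lemma Y_cross_nv: "cross3 Y nv = X"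
  using Epos by (simp add: nv_def cross_mult_right cross_skew[of Y] cross_cross_left XY YY)
lemma nv_cross_Y: "cross3 nv Y = - X" using Y_cross_nv cross_skew by metis

lemma decomp: "v = ((v \<bullet> X) / E) *\<^sub>R X + ((v \<bullet> Y) / E) *\<^sub>R Y + (v \<bullet> nv) *\<^sub>R nv"
proof -
  define w where "w = ((v \<bullet> X) / E) *\<^sub>R X + ((v \<bullet> Y) / E) *\<^sub>R Y + (v \<bullet> nv) *\<^sub>R nv - v"
  have "w \<bullet> X = 0" using Epos by (simp add: w_def inner_diff_left inner_add_left XX YX nX)
  moreover have "w \<bullet> Y = 0" using Epos by (simp add: w_def inner_diff_left inner_add_left YY XY nY)
  moreover have "w \<bullet> nv = 0" by (simp add: w_def inner_diff_left inner_add_left nX nY nn)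
  then have "w \<bullet> cross3 X Y = 0" by (simp add: XY_cross)
  ultimately have "w = 0" using cross_zero_perp N_nz by blast
  then show ?thesis by (simp add: w_def)
qed

end


context frame begin

lemma cross_frame_simps:
  "cross3 X X = 0" "cross3 Y Y = 0" "cross3 nv nv = 0"
  "cross3 X Y = E *\<^sub>R nv" "cross3 Y X = - (E *\<^sub>R nv)"
  "cross3 nv X = Y" "cross3 X nv = - Y" "cross3 Y nv = X" "cross3 nv Y = - X"
  using XY_cross YX_cross nv_cross_X X_cross_nv Y_cross_nv nv_cross_Y by auto

lemma inner_frame_simps:
  "X \<bullet> X = E" "Y \<bullet> Y = E" "X \<bullet> Y = 0" "Y \<bullet> X = 0" "nv \<bullet> nv = 1"
  "nv \<bullet> X = 0" "X \<bullet> nv = 0" "nv \<bullet> Y = 0" "Y \<bullet> nv = 0"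
  using XX YY XY YX nn nX nY by auto

lemmas fsimps = cross_frame_simps inner_frame_simps inner_add_left inner_add_right
  inner_scaleR_left inner_scaleR_right inner_diff_left inner_diff_right inner_minus_left inner_minus_right
  cross_add_left cross_add_right cross_mult_left cross_mult_right left_diff_distrib right_diff_distrib
  cross_minus_left cross_minus_right

lemma rprime:
  assumes e: "e = ex *\<^sub>R X + ey *\<^sub>R Y + ez *\<^sub>R nv"
  shows "(cross3 X Y \<bullet> (cross3 X (a2 *\<^sub>R e) + cross3 (a1 *\<^sub>R e) Y)) / norm (cross3 X Y)
     = (X \<bullet> e) * a1 + (Y \<bullet> e) * a2"
  using Epos unfolding normN e by (simp add: fsimps field_simps)

lemma Hprime:
  fixes ph :: "2 \<Rightarrow> 2 \<Rightarrow> real"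
  assumes e: "e = ex *\<^sub>R X + ey *\<^sub>R Y + ez *\<^sub>R nv"
    and S: "S = (\<lambda>i j. sx i j *\<^sub>R X + sy i j *\<^sub>R Y + sz i j *\<^sub>R nv)"
    and rel: "sx 2 1 = sx 1 2" "sx 2 2 = - sx 1 1" "sy 1 1 = - sx 1 2" "sy 1 2 = sx 1 1"
      "sy 2 1 = sx 1 1" "sy 2 2 = sx 1 2" "sz 2 1 = sz 1 2"
  shows "2 * HsD (X \<bullet> X) (X \<bullet> Y) (Y \<bullet> Y) (S 1 1 \<bullet> cross3 X Y) (S 1 2 \<bullet> cross3 X Y)
      (S 2 1 \<bullet> cross3 X Y) (S 2 2 \<bullet> cross3 X Y) (norm (cross3 X Y))
      (X \<bullet> (a1 *\<^sub>R e) + (a1 *\<^sub>R e) \<bullet> X) (X \<bullet> (a2 *\<^sub>R e) + (a1 *\<^sub>R e) \<bullet> Y) (Y \<bullet> (a2 *\<^sub>R e) + (a2 *\<^sub>R e) \<bullet> Y)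
      (S 1 1 \<bullet> (cross3 X (a2 *\<^sub>R e) + cross3 (a1 *\<^sub>R e) Y) + (ph 1 1 *\<^sub>R e) \<bullet> cross3 X Y)
      (S 1 2 \<bullet> (cross3 X (a2 *\<^sub>R e) + cross3 (a1 *\<^sub>R e) Y) + (ph 1 2 *\<^sub>R e) \<bullet> cross3 X Y)
      (S 2 1 \<bullet> (cross3 X (a2 *\<^sub>R e) + cross3 (a1 *\<^sub>R e) Y) + (ph 2 1 *\<^sub>R e) \<bullet> cross3 X Y)
      (S 2 2 \<bullet> (cross3 X (a2 *\<^sub>R e) + cross3 (a1 *\<^sub>R e) Y) + (ph 2 2 *\<^sub>R e) \<bullet> cross3 X Y)
      ((cross3 X Y \<bullet> (cross3 X (a2 *\<^sub>R e) + cross3 (a1 *\<^sub>R e) Y)) / norm (cross3 X Y)) * E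
    = nv \<bullet> e * (ph 1 1 + ph 2 2)
      + 2 * ((- ((nv \<bullet> S 1 1) / E) *\<^sub>R X - ((nv \<bullet> S 1 2) / E) *\<^sub>R Y) \<bullet> e * a1
           + (- ((nv \<bullet> S 2 1) / E) *\<^sub>R X - ((nv \<bullet> S 2 2) / E) *\<^sub>R Y) \<bullet> e * a2)"
  using Epos unfolding normN HsD_def e S by (simp add: fsimps rel) (simp add: field_simps power2_eq_square)

end


lemma cont_comp_UNIV: "continuous_on UNIV F \<Longrightarrow> continuous_on T g \<Longrightarrow> continuous_on T (\<lambda>z. F (g z))"
  by (rule continuous_on_compose2[of UNIV F T g]) auto

lemma Dg_nz: "cross3 A B \<noteq> 0 \<Longrightarrow> A \<bullet> A * (B \<bullet> B) - A \<bullet> B * (A \<bullet> B) \<noteq> 0"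
  using Dg_norm[of A B] by (simp add: Dg_def)

lemma cont_Hs:
  assumes "continuous_on T a" "continuous_on T b" "continuous_on T c" "continuous_on T b11"
    "continuous_on T b12" "continuous_on T b21" "continuous_on T b22" "continuous_on T r"
    "\<And>z. z \<in> T \<Longrightarrow> a z * c z - b z * b z \<noteq> 0" "\<And>z. z \<in> T \<Longrightarrow> r z \<noteq> 0"
  shows "continuous_on T (\<lambda>z. Hs (a z) (b z) (c z) (b11 z) (b12 z) (b21 z) (b22 z) (r z))"
  unfolding Hs_def using assms by (intro continuous_intros) auto

lemma cont_HsD:
  assumes "continuous_on T a" "continuous_on T b" "continuous_on T c" "continuous_on T b11"
    "continuous_on T b12" "continuous_on T b21" "continuous_on T b22" "continuous_on T r"
    "continuous_on T a'" "continuous_on T b'" "continuous_on T c'" "continuous_on T b11'"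
    "continuous_on T b12'" "continuous_on T b21'" "continuous_on T b22'" "continuous_on T r'"
    "\<And>z. z \<in> T \<Longrightarrow> a z * c z - b z * b z \<noteq> 0" "\<And>z. z \<in> T \<Longrightarrow> r z \<noteq> 0"
  shows "continuous_on T (\<lambda>z. HsD (a z) (b z) (c z) (b11 z) (b12 z) (b21 z) (b22 z) (r z)
     (a' z) (b' z) (c' z) (b11' z) (b12' z) (b21' z) (b22' z) (r' z))"
  unfolding HsD_def using assms by (intro continuous_intros) auto

lemma cont_GW:
  fixes X Y X' Y' :: "'z::t2_space \<Rightarrow> real^3" and S S' :: "'z \<Rightarrow> 2 \<Rightarrow> 2 \<Rightarrow> real^3"
    and t :: "'z \<Rightarrow> real"
  assumes c: "continuous_on T X" "continuous_on T Y" "continuous_on T X'" "continuous_on T Y'"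
    "\<And>i j. continuous_on T (\<lambda>z. S z i j)" "\<And>i j. continuous_on T (\<lambda>z. S' z i j)"
    "continuous_on T t" and F: "continuous_on UNIV F" "continuous_on UNIV F'"
    and N: "\<And>z. z \<in> T \<Longrightarrow> cross3 (X z + t z *\<^sub>R X' z) (Y z + t z *\<^sub>R Y' z) \<noteq> 0"
  shows "continuous_on T (\<lambda>z. GW F F' (X z) (Y z) (S z) (X' z) (Y' z) (S' z) (t z))"
proof -
  have N': "\<And>z. z \<in> T \<Longrightarrow> norm (cross3 (X z + t z *\<^sub>R X' z) (Y z + t z *\<^sub>R Y' z)) \<noteq> 0"
    using N by simp
  show ?thesis
  unfolding GW_def Let_def
  apply (intro continuous_intros cont_Hs cont_HsD continuous_on_cross cont_comp_UNIV[OF F(1)] cont_comp_UNIV[OF F(2)] c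
      Dg_nz N N')
  using N' by auto
qed

lemma cont_ad:
  assumes "continuous_on T a" "continuous_on T b" "continuous_on T c"
  shows "continuous_on T (\<lambda>z. ad (a z) (b z) (c z) i j)"
  unfolding ad_def using assms by (cases "i = 1"; cases "j = 1") (auto intro!: continuous_intros)

lemma cont_Qs:
  assumes "continuous_on T a" "continuous_on T b" "continuous_on T c" "\<And>i j. continuous_on T (\<lambda>z. \<beta> z i j)"
  shows "continuous_on T (\<lambda>z. Qs (a z) (b z) (c z) (\<beta> z))"
  unfolding Qs_def by (intro continuous_intros cont_ad assms)

lemma cont_QsD:
  assumes "continuous_on T a" "continuous_on T b" "continuous_on T c" "\<And>i j. continuous_on T (\<lambda>z. \<beta> z i j)"
    "continuous_on T a'" "continuous_on T b'" "continuous_on T c'" "\<And>i j. continuous_on T (\<lambda>z. \<beta>' z i j)"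
  shows "continuous_on T (\<lambda>z. QsD (a z) (b z) (c z) (\<beta> z) (a' z) (b' z) (c' z) (\<beta>' z))"
  unfolding QsD_def by (intro continuous_intros cont_ad assms)

lemma cont_GE:
  fixes X Y X' Y' :: "'z::t2_space \<Rightarrow> real^3" and S S' :: "'z \<Rightarrow> 2 \<Rightarrow> 2 \<Rightarrow> real^3"
    and t :: "'z \<Rightarrow> real"
  assumes c: "continuous_on T X" "continuous_on T Y" "continuous_on T X'" "continuous_on T Y'"
    "\<And>i j. continuous_on T (\<lambda>z. S z i j)" "\<And>i j. continuous_on T (\<lambda>z. S' z i j)"
    "continuous_on T t" and F: "continuous_on UNIV F" "continuous_on UNIV F'"
    and N: "\<And>z. z \<in> T \<Longrightarrow> cross3 (X z + t z *\<^sub>R X' z) (Y z + t z *\<^sub>R Y' z) \<noteq> 0"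
  shows "continuous_on T (\<lambda>z. GE F F' (X z) (Y z) (S z) (X' z) (Y' z) (S' z) (t z))"
proof -
  have N': "\<And>z. z \<in> T \<Longrightarrow> norm (cross3 (X z + t z *\<^sub>R X' z) (Y z + t z *\<^sub>R Y' z)) \<noteq> 0"
    using N by simp
  have N'': "\<And>z. z \<in> T \<Longrightarrow> cross3 (X z + t z *\<^sub>R X' z) (Y z + t z *\<^sub>R Y' z) \<bullet> cross3 (X z + t z *\<^sub>R X' z) (Y z + t z *\<^sub>R Y' z) \<noteq> 0"
    using N by simp
  show ?thesis
  unfolding GE_def Let_def As_def AsD_def
  apply (intro continuous_intros cont_Qs cont_QsD continuous_on_cross cont_comp_UNIV[OF F(1)] cont_comp_UNIV[OF F(2)] c)
  using N' N'' Dg_nz[OF N] by auto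
qed


lemma diff_cross: "f differentiable at p \<Longrightarrow> g differentiable at p \<Longrightarrow>
   (\<lambda>x. cross3 (f x) (g x)) differentiable at p"
  unfolding differentiable_def using bounded_bilinear.FDERIV[OF bb_cross] by blast

lemma diff_inner: "f differentiable at p \<Longrightarrow> g differentiable at p \<Longrightarrow>
   (\<lambda>x. f x \<bullet> g x) differentiable at p"
  by simp

lemma nrm_eq: "nrm \<Psi> = (\<lambda>q. (1 / norm (cross3 (pd 1 \<Psi> q) (pd 2 \<Psi> q))) *\<^sub>R cross3 (pd 1 \<Psi> q) (pd 2 \<Psi> q))"
  by (rule ext) (simp add: nrm_def)

lemma pert_gen:
  assumes g: "g differentiable at p" and \<phi>: "smooth_on UNIV \<phi>"
  shows "pd i (\<lambda>x. g x + t *\<^sub>R (\<phi> x *\<^sub>R e)) p = pd i g p + t *\<^sub>R (pd i \<phi> p *\<^sub>R e)"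
proof -
  have d\<phi>: "\<phi> differentiable at p" using smooth_diff[OF \<phi>] by simp
  have "pd i (\<lambda>x. g x + t *\<^sub>R (\<phi> x *\<^sub>R e)) p = pd i g p + pd i (\<lambda>x. t *\<^sub>R (\<phi> x *\<^sub>R e)) p"
    by (rule pd_add[OF g]) (intro differentiable_scaleR diff_scaleR_c d\<phi> differentiable_const)
  also have "pd i (\<lambda>x. t *\<^sub>R (\<phi> x *\<^sub>R e)) p = t *\<^sub>R pd i (\<lambda>x. \<phi> x *\<^sub>R e) p"
    by (rule pd_cscale) (rule diff_scaleR_c[OF d\<phi>])
  finally show ?thesis unfolding pd_scaleR_const[OF d\<phi>] .
qed

locale cim =
  fixes U :: "(real^2) set" and \<Phi> :: "real^2 \<Rightarrow> real^3" and lam :: "real^2 \<Rightarrow> real"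
  assumes U: "open U" and sm: "smooth_on U \<Phi>"
    and cf: "\<And>p i j. p \<in> U \<Longrightarrow> pd i \<Phi> p \<bullet> pd j \<Phi> p = (if i = j then exp (2 * lam p) else 0)"
begin

abbreviation "Xv \<equiv> pd 1 \<Phi>"
abbreviation "Yv \<equiv> pd 2 \<Phi>"
abbreviation "SS p \<equiv> (\<lambda>i j. pd i (pd j \<Phi>) p)"
abbreviation "Ev p \<equiv> exp (2 * lam p)"
abbreviation "nn \<equiv> nrm \<Phi>"

lemma XX: "p \<in> U \<Longrightarrow> Xv p \<bullet> Xv p = Ev p" using cf[of p 1 1] by simp
lemma YY: "p \<in> U \<Longrightarrow> Yv p \<bullet> Yv p = Ev p" using cf[of p 2 2] by simp
lemma XY: "p \<in> U \<Longrightarrow> Xv p \<bullet> Yv p = 0" using cf[of p 1 2] by simp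

lemma fr: "p \<in> U \<Longrightarrow> frame (Xv p) (Yv p) (Ev p)"
  by unfold_locales (auto simp: XX YY XY)

lemma n_nv: "p \<in> U \<Longrightarrow> nn p = frame.nv (Xv p) (Yv p) (Ev p)"
  using frame.normN[OF fr] by (simp add: nrm_def frame.nv_def[OF fr])

lemma N_nz: "p \<in> U \<Longrightarrow> cross3 (Xv p) (Yv p) \<noteq> 0" using frame.N_nz[OF fr] .

lemma sm1: "smooth_on U (pd i \<Phi>)" using smooth_pd[OF sm] .
lemma sm2: "smooth_on U (pd i (pd j \<Phi>))" using smooth_pd[OF sm1] .
lemma d0: "p \<in> U \<Longrightarrow> \<Phi> differentiable at p" using smooth_diff[OF sm] .
lemma d1: "p \<in> U \<Longrightarrow> pd i \<Phi> differentiable at p" using smooth_diff[OF sm1] .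
lemma d2: "p \<in> U \<Longrightarrow> pd i (pd j \<Phi>) differentiable at p" using smooth_diff[OF sm2] .
lemma c1: "continuous_on U (pd i \<Phi>)" using smooth_cont[OF sm1] .
lemma c2: "continuous_on U (pd i (pd j \<Phi>))" using smooth_cont[OF sm2] .

lemma n_diff: "p \<in> U \<Longrightarrow> nn differentiable at p"
proof -
  assume p: "p \<in> U"
  have dN: "(\<lambda>q. cross3 (Xv q) (Yv q)) differentiable at p" using d1[OF p] by (intro diff_cross)
  have "(\<lambda>q. norm (cross3 (Xv q) (Yv q))) differentiable at p"
    by (rule differentiable_compose[OF differentiable_norm_at[OF N_nz[OF p]] dN])
  then show ?thesis unfolding nrm_eq using dN N_nz[OF p] by (intro differentiable_scaleR differentiable_divide) auto
qed

lemma sym2: "p \<in> U \<Longrightarrow> SS p 1 2 = SS p 2 1"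
  using schwarz_vec[OF U sm] by simp

lemma rel_a: assumes p: "p \<in> U" shows "SS p k 1 \<bullet> Xv p = SS p k 2 \<bullet> Yv p"
proof -
  have "pd k (\<lambda>q. Xv q \<bullet> Xv q) p = pd k (\<lambda>q. Yv q \<bullet> Yv q) p"
    by (rule pd_local[OF U p]) (simp add: XX YY)
  then show ?thesis using pd_inner[OF d1[OF p] d1[OF p], of k 1 1] pd_inner[OF d1[OF p] d1[OF p], of k 2 2]
    by (simp add: inner_commute)
qed

lemma rel_b: assumes p: "p \<in> U" shows "SS p k 1 \<bullet> Yv p + Xv p \<bullet> SS p k 2 = 0"
proof -
  have "pd k (\<lambda>q. Xv q \<bullet> Yv q) p = pd k (\<lambda>q. 0::real) p"
    by (rule pd_local[OF U p]) (simp add: XY)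
  then show ?thesis using pd_inner[OF d1[OF p] d1[OF p], of k 1 2]
    by (simp add: pd_const inner_commute add.commute)
qed

lemma dn: assumes p: "p \<in> U"
  shows "pd k nn p = - ((nn p \<bullet> SS p k 1) / Ev p) *\<^sub>R Xv p - ((nn p \<bullet> SS p k 2) / Ev p) *\<^sub>R Yv p"
proof -
  interpret F: frame "Xv p" "Yv p" "Ev p" using fr[OF p] .
  have h1: "pd k (\<lambda>q. nn q \<bullet> Xv q) p = pd k (\<lambda>q. 0::real) p"
    by (rule pd_local[OF U p]) (simp add: n_nv frame.nX[OF fr])
  have h2: "pd k (\<lambda>q. nn q \<bullet> Yv q) p = pd k (\<lambda>q. 0::real) p"
    by (rule pd_local[OF U p]) (simp add: n_nv frame.nY[OF fr])
  have h3: "pd k (\<lambda>q. nn q \<bullet> nn q) p = pd k (\<lambda>q. 1::real) p"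
    by (rule pd_local[OF U p]) (simp add: n_nv frame.nn[OF fr])
  have a: "pd k nn p \<bullet> Xv p = - (nn p \<bullet> SS p k 1)"
    using h1 pd_inner[OF n_diff[OF p] d1[OF p], of k 1] by (simp add: pd_const)
  have b: "pd k nn p \<bullet> Yv p = - (nn p \<bullet> SS p k 2)"
    using h2 pd_inner[OF n_diff[OF p] n_diff[OF p], of k] pd_inner[OF n_diff[OF p] d1[OF p], of k 2] by (simp add: pd_const)
  have c: "pd k nn p \<bullet> F.nv = 0"
    using h3 pd_inner[OF n_diff[OF p] n_diff[OF p], of k] by (simp add: pd_const n_nv[OF p] inner_commute)
  show ?thesis using F.decomp[of "pd k nn p"] a b c by simp
qed

lemma cont_N: "continuous_on U (\<lambda>q. cross3 (Xv q) (Yv q))"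
  by (intro continuous_on_cross c1)

lemma cont_n: "continuous_on U nn"
  unfolding nrm_eq using N_nz by (intro continuous_intros cont_N c1) auto

lemma cont_Ev: "continuous_on U Ev"
proof -
  have "continuous_on U (\<lambda>p. Xv p \<bullet> Xv p)" by (intro continuous_intros c1)
  then show ?thesis using XX by (metis (no_types, lifting) continuous_on_cong)
qed

lemma Ev_pos: "Ev p > 0" by simp

lemma cont_dn: "continuous_on U (pd k nn)"
proof -
  have "continuous_on U (\<lambda>p. - ((nn p \<bullet> SS p k 1) / Ev p) *\<^sub>R Xv p - ((nn p \<bullet> SS p k 2) / Ev p) *\<^sub>R Yv p)"
    by (intro continuous_intros cont_n c2 c1 cont_Ev) auto
  then show ?thesis using dn by (metis (no_types, lifting) continuous_on_cong)
qed

lemma cont_mcurv: "continuous_on U (mcurv \<Phi>)"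
proof -
  have "continuous_on U (\<lambda>p. Hj (Xv p) (Yv p) (SS p))"
    unfolding Hj_Hs using N_nz Dg_nz[OF N_nz]
    by (intro cont_Hs continuous_intros c1 c2 continuous_on_cross) auto
  then show ?thesis using mcurv_jet[OF N_nz] by (metis (no_types, lifting) continuous_on_cong)
qed

lemma cont_sqA: "continuous_on U (sqA \<Phi>)"
proof -
  have "continuous_on U (\<lambda>p. Aj (Xv p) (Yv p) (SS p))"
    unfolding Aj_As As_def using N_nz Dg_nz[OF N_nz]
    by (intro cont_Qs continuous_intros c1 c2 continuous_on_cross) auto
  then show ?thesis using sqA_jet[OF N_nz] by (metis (no_types, lifting) continuous_on_cong)
qed

lemma pert1:
  assumes p: "p \<in> U" and \<phi>: "smooth_on UNIV \<phi>"
  shows "pd i (\<lambda>x. \<Phi> x + t *\<^sub>R (\<phi> x *\<^sub>R e)) p = pd i \<Phi> p + t *\<^sub>R (pd i \<phi> p *\<^sub>R e)"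
  by (rule pert_gen[OF d0[OF p] \<phi>])

lemma pert2:
  assumes p: "p \<in> U" and \<phi>: "smooth_on UNIV \<phi>"
  shows "pd i (pd j (\<lambda>x. \<Phi> x + t *\<^sub>R (\<phi> x *\<^sub>R e))) p = pd i (pd j \<Phi>) p + t *\<^sub>R (pd i (pd j \<phi>) p *\<^sub>R e)"
proof -
  have "pd i (pd j (\<lambda>x. \<Phi> x + t *\<^sub>R (\<phi> x *\<^sub>R e))) p = pd i (\<lambda>x. pd j \<Phi> x + t *\<^sub>R (pd j \<phi> x *\<^sub>R e)) p"
    by (rule pd_local[OF U p]) (simp only: pert1[OF _ \<phi>])
  also have "\<dots> = pd i (pd j \<Phi>) p + t *\<^sub>R (pd i (pd j \<phi>) p *\<^sub>R e)"
    by (rule pert_gen[OF d1[OF p] smooth_pd[OF \<phi>]])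
  finally show ?thesis .
qed

end


context cim begin

lemma delta_exists:
  assumes K: "compact K" "K \<subseteq> U" and cX: "continuous_on K X'" "continuous_on K Y'"
  shows "\<exists>\<delta>>0. \<forall>t\<in>cball 0 \<delta>. \<forall>p\<in>K. cross3 (Xv p + t *\<^sub>R X' p) (Yv p + t *\<^sub>R Y' p) \<noteq> 0"
proof (cases "K = {}")
  case True then show ?thesis by (intro exI[of _ 1]) auto
next
  case False
  have cE: "continuous_on K Ev" using continuous_on_subset[OF cont_Ev K(2)] .
  obtain p0 where p0: "p0 \<in> K" "\<forall>p\<in>K. Ev p0 \<le> Ev p"
    using continuous_attains_inf[OF K(1) False cE] by blast
  define m where "m = Ev p0"
  have m: "m > 0" by (simp add: m_def)
  define f where "f = (\<lambda>(t::real, p). norm (cross3 (Xv p + t *\<^sub>R X' p) (Yv p + t *\<^sub>R Y' p)))"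
  have cXK: "continuous_on K Xv" "continuous_on K Yv" using continuous_on_subset[OF c1 K(2)] by auto
  have cf: "continuous_on (UNIV \<times> K) f"
    unfolding f_def case_prod_beta
    by (intro continuous_intros continuous_on_cross continuous_on_compose2[OF cXK(1)]
        continuous_on_compose2[OF cXK(2)] continuous_on_compose2[OF cX(1)] continuous_on_compose2[OF cX(2)]) auto
  have "m / 2 > 0" using m by simp
  from continuous_on_prod_compactE[OF cf K(1) _ this, of 0]
  obtain X0 where X0: "0 \<in> X0" "open X0" "\<forall>x\<in>X0 \<inter> UNIV. \<forall>t\<in>K. dist (f (x, t)) (f (0, t)) \<le> m / 2"
    by auto
  obtain \<delta> where \<delta>: "\<delta> > 0" "cball 0 \<delta> \<subseteq> X0" using X0(1,2) open_contains_cball by blast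
  show ?thesis
  proof (intro exI[of _ \<delta>] conjI ballI \<delta>(1))
    fix t p assume t: "t \<in> cball (0::real) \<delta>" and p: "p \<in> K"
    have f0: "f (0, p) = Ev p" using frame.normN[OF fr] p K(2) by (auto simp: f_def)
    have "dist (f (t, p)) (f (0, p)) \<le> m / 2" using X0(3) \<delta>(2) t p by blast
    moreover have "Ev p \<ge> m" using p0 p by (simp add: m_def)
    ultimately have "f (t, p) > 0" using f0 m unfolding dist_real_def by argo
    then show "cross3 (Xv p + t *\<^sub>R X' p) (Yv p + t *\<^sub>R Y' p) \<noteq> 0" by (auto simp: f_def)
  qed
qed

lemma cont_snd_comp: "continuous_on S f \<Longrightarrow> K \<subseteq> S \<Longrightarrow> continuous_on (T \<times> K) (\<lambda>z. f (snd z))"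
  by (rule continuous_on_compose2[of S f _ snd]) (auto intro: continuous_intros)

lemma W1:
  assumes F: "\<And>s. (F has_real_derivative F' s) (at s)" and F'c: "continuous_on UNIV F'"
    and \<phi>: "smooth_on UNIV \<phi>" and K: "compact K" "K \<subseteq> U"
  shows "((\<lambda>t. WF F (\<lambda>p. \<Phi> p + t *\<^sub>R (\<phi> p *\<^sub>R e)) K) has_real_derivative
    integral K (\<lambda>p. GW F F' (Xv p) (Yv p) (SS p) (pd 1 \<phi> p *\<^sub>R e) (pd 2 \<phi> p *\<^sub>R e)
       (\<lambda>i j. pd i (pd j \<phi>) p *\<^sub>R e) 0)) (at 0)"
proof -
  define X' where "X' p = pd 1 \<phi> p *\<^sub>R e" for p
  define Y' where "Y' p = pd 2 \<phi> p *\<^sub>R e" for p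
  define S' where "S' p = (\<lambda>i j. pd i (pd j \<phi>) p *\<^sub>R e)" for p
  have cF: "continuous_on UNIV F"
    using F by (meson DERIV_isCont continuous_at_imp_continuous_on)
  have c\<phi>1: "continuous_on UNIV (pd i \<phi>)" for i using smooth_cont[OF smooth_pd[OF \<phi>]] .
  have c\<phi>2: "continuous_on UNIV (pd i (pd j \<phi>))" for i j using smooth_cont[OF smooth_pd[OF smooth_pd[OF \<phi>]]] .
  have cX': "continuous_on UNIV X'" "continuous_on UNIV Y'" "continuous_on UNIV (\<lambda>p. S' p i j)" for i j
    unfolding X'_def Y'_def S'_def by (auto intro!: continuous_intros c\<phi>1 c\<phi>2)
  obtain \<delta> where \<delta>: "\<delta> > 0" "\<forall>t\<in>cball 0 \<delta>. \<forall>p\<in>K. cross3 (Xv p + t *\<^sub>R X' p) (Yv p + t *\<^sub>R Y' p) \<noteq> 0"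
    using delta_exists[OF K continuous_on_subset[OF cX'(1)] continuous_on_subset[OF cX'(2)]] by auto
  define G where "G t p = F ((Hj (Xv p + t *\<^sub>R X' p) (Yv p + t *\<^sub>R Y' p) (\<lambda>i j. SS p i j + t *\<^sub>R S' p i j))\<^sup>2)
      * norm (cross3 (Xv p + t *\<^sub>R X' p) (Yv p + t *\<^sub>R Y' p))" for t p
  have L: "((\<lambda>t. integral K (G t)) has_real_derivative
      integral K (\<lambda>p. GW F F' (Xv p) (Yv p) (SS p) (X' p) (Y' p) (S' p) 0)) (at 0)"
  proof (rule leibniz_compact[OF K(1) \<delta>(1)])
    show "((\<lambda>t. G t x) has_real_derivative GW F F' (Xv x) (Yv x) (SS x) (X' x) (Y' x) (S' x) t) (at t)"
      if "t \<in> cball 0 \<delta>" "x \<in> K" for t x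
      unfolding G_def by (rule GW_deriv[OF F]) (use \<delta>(2) that in blast)
    have "continuous_on (cball 0 \<delta> \<times> K) (\<lambda>z. GW F F' (Xv (snd z)) (Yv (snd z)) (SS (snd z)) (X' (snd z)) (Y' (snd z)) (S' (snd z)) (fst z))"
      using \<delta>(2) K(2)
      by (intro cont_GW cF F'c cont_snd_comp[OF c1] cont_snd_comp[OF c2] cont_snd_comp[OF cX'(1)]
          cont_snd_comp[OF cX'(2)] cont_snd_comp[OF cX'(3)] continuous_intros) auto
    then show "continuous_on (cball 0 \<delta> \<times> K) (\<lambda>(t, x). GW F F' (Xv x) (Yv x) (SS x) (X' x) (Y' x) (S' x) t)"
      by (simp add: case_prod_beta)
    show "continuous_on K (G t)" if t: "t \<in> cball 0 \<delta>" for t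
    proof -
      have cXK: "continuous_on K Xv" "continuous_on K Yv" "continuous_on K (\<lambda>p. SS p i j)" for i j
        using continuous_on_subset[OF c1 K(2)] continuous_on_subset[OF c2 K(2)] by auto
      have N: "p \<in> K \<Longrightarrow> cross3 (Xv p + t *\<^sub>R X' p) (Yv p + t *\<^sub>R Y' p) \<noteq> 0" for p using \<delta>(2) t by blast
      show ?thesis unfolding G_def Hj_Hs
        using N Dg_nz[OF N]
        by (intro continuous_intros cont_comp_UNIV[OF cF] cont_Hs continuous_on_cross cXK
            continuous_on_subset[OF cX'(1)] continuous_on_subset[OF cX'(2)] continuous_on_subset[OF cX'(3)]) auto
    qed
  qed
  have eq: "integral K (G t) = WF F (\<lambda>p. \<Phi> p + t *\<^sub>R (\<phi> p *\<^sub>R e)) K" if t: "t \<in> ball 0 \<delta>" for t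
    unfolding WF_def
  proof (rule integral_cong)
    fix p assume p: "p \<in> K"
    then have pU: "p \<in> U" using K(2) by auto
    have N: "cross3 (Xv p + t *\<^sub>R X' p) (Yv p + t *\<^sub>R Y' p) \<noteq> 0" using \<delta>(2) t p by auto
    show "G t p = F ((mcurv (\<lambda>p. \<Phi> p + t *\<^sub>R (\<phi> p *\<^sub>R e)) p)\<^sup>2) * area (\<lambda>p. \<Phi> p + t *\<^sub>R (\<phi> p *\<^sub>R e)) p"
    proof -
      note P1 = pert1[OF pU \<phi>, of _ t e] and P2 = pert2[OF pU \<phi>, of _ _ t e]
      have N': "cross3 (pd 1 (\<lambda>p. \<Phi> p + t *\<^sub>R (\<phi> p *\<^sub>R e)) p) (pd 2 (\<lambda>p. \<Phi> p + t *\<^sub>R (\<phi> p *\<^sub>R e)) p) \<noteq> 0"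
        unfolding P1 using N unfolding X'_def Y'_def .
      show ?thesis unfolding mcurv_jet[OF N'] area_def P1 P2 G_def X'_def Y'_def S'_def ..
    qed
  qed
  have "((\<lambda>t. WF F (\<lambda>p. \<Phi> p + t *\<^sub>R (\<phi> p *\<^sub>R e)) K) has_real_derivative
      integral K (\<lambda>p. GW F F' (Xv p) (Yv p) (SS p) (X' p) (Y' p) (S' p) 0)) (at 0)"
    by (rule has_field_derivative_transform_within_open[OF L, of "ball 0 \<delta>"]) (use \<delta>(1) eq in auto)
  then show ?thesis unfolding X'_def Y'_def S'_def .
qed

lemma E1:
  assumes F: "\<And>s. (F has_real_derivative F' s) (at s)" and F'c: "continuous_on UNIV F'"
    and \<phi>: "smooth_on UNIV \<phi>" and K: "compact K" "K \<subseteq> U"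
  shows "((\<lambda>t. EF F (\<lambda>p. \<Phi> p + t *\<^sub>R (\<phi> p *\<^sub>R e)) K) has_real_derivative
    integral K (\<lambda>p. GE F F' (Xv p) (Yv p) (SS p) (pd 1 \<phi> p *\<^sub>R e) (pd 2 \<phi> p *\<^sub>R e)
       (\<lambda>i j. pd i (pd j \<phi>) p *\<^sub>R e) 0)) (at 0)"
proof -
  define X' where "X' p = pd 1 \<phi> p *\<^sub>R e" for p
  define Y' where "Y' p = pd 2 \<phi> p *\<^sub>R e" for p
  define S' where "S' p = (\<lambda>i j. pd i (pd j \<phi>) p *\<^sub>R e)" for p
  have cF: "continuous_on UNIV F"
    using F by (meson DERIV_isCont continuous_at_imp_continuous_on)
  have c\<phi>1: "continuous_on UNIV (pd i \<phi>)" for i using smooth_cont[OF smooth_pd[OF \<phi>]] .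
  have c\<phi>2: "continuous_on UNIV (pd i (pd j \<phi>))" for i j using smooth_cont[OF smooth_pd[OF smooth_pd[OF \<phi>]]] .
  have cX': "continuous_on UNIV X'" "continuous_on UNIV Y'" "continuous_on UNIV (\<lambda>p. S' p i j)" for i j
    unfolding X'_def Y'_def S'_def by (auto intro!: continuous_intros c\<phi>1 c\<phi>2)
  obtain \<delta> where \<delta>: "\<delta> > 0" "\<forall>t\<in>cball 0 \<delta>. \<forall>p\<in>K. cross3 (Xv p + t *\<^sub>R X' p) (Yv p + t *\<^sub>R Y' p) \<noteq> 0"
    using delta_exists[OF K continuous_on_subset[OF cX'(1)] continuous_on_subset[OF cX'(2)]] by auto
  define G where "G t p = F (Aj (Xv p + t *\<^sub>R X' p) (Yv p + t *\<^sub>R Y' p) (\<lambda>i j. SS p i j + t *\<^sub>R S' p i j))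
      * norm (cross3 (Xv p + t *\<^sub>R X' p) (Yv p + t *\<^sub>R Y' p))" for t p
  have L: "((\<lambda>t. integral K (G t)) has_real_derivative
      integral K (\<lambda>p. GE F F' (Xv p) (Yv p) (SS p) (X' p) (Y' p) (S' p) 0)) (at 0)"
  proof (rule leibniz_compact[OF K(1) \<delta>(1)])
    show "((\<lambda>t. G t x) has_real_derivative GE F F' (Xv x) (Yv x) (SS x) (X' x) (Y' x) (S' x) t) (at t)"
      if "t \<in> cball 0 \<delta>" "x \<in> K" for t x
      unfolding G_def by (rule GE_deriv[OF F]) (use \<delta>(2) that in blast)
    have "continuous_on (cball 0 \<delta> \<times> K) (\<lambda>z. GE F F' (Xv (snd z)) (Yv (snd z)) (SS (snd z)) (X' (snd z)) (Y' (snd z)) (S' (snd z)) (fst z))"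
      using \<delta>(2) K(2)
      by (intro cont_GE cF F'c cont_snd_comp[OF c1] cont_snd_comp[OF c2] cont_snd_comp[OF cX'(1)]
          cont_snd_comp[OF cX'(2)] cont_snd_comp[OF cX'(3)] continuous_intros) auto
    then show "continuous_on (cball 0 \<delta> \<times> K) (\<lambda>(t, x). GE F F' (Xv x) (Yv x) (SS x) (X' x) (Y' x) (S' x) t)"
      by (simp add: case_prod_beta)
    show "continuous_on K (G t)" if t: "t \<in> cball 0 \<delta>" for t
    proof -
      have cXK: "continuous_on K Xv" "continuous_on K Yv" "continuous_on K (\<lambda>p. SS p i j)" for i j
        using continuous_on_subset[OF c1 K(2)] continuous_on_subset[OF c2 K(2)] by auto
      have N: "p \<in> K \<Longrightarrow> cross3 (Xv p + t *\<^sub>R X' p) (Yv p + t *\<^sub>R Y' p) \<noteq> 0" for p using \<delta>(2) t by blast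
      show ?thesis unfolding G_def Aj_As As_def
        using N Dg_nz[OF N]
        by (intro continuous_intros cont_comp_UNIV[OF cF] cont_Qs continuous_on_cross cXK
            continuous_on_subset[OF cX'(1)] continuous_on_subset[OF cX'(2)] continuous_on_subset[OF cX'(3)]) auto
    qed
  qed
  have eq: "integral K (G t) = EF F (\<lambda>p. \<Phi> p + t *\<^sub>R (\<phi> p *\<^sub>R e)) K" if t: "t \<in> ball 0 \<delta>" for t
    unfolding EF_def
  proof (rule integral_cong)
    fix p assume p: "p \<in> K"
    then have pU: "p \<in> U" using K(2) by auto
    have N: "cross3 (Xv p + t *\<^sub>R X' p) (Yv p + t *\<^sub>R Y' p) \<noteq> 0" using \<delta>(2) t p by auto
    show "G t p = F (sqA (\<lambda>p. \<Phi> p + t *\<^sub>R (\<phi> p *\<^sub>R e)) p) * area (\<lambda>p. \<Phi> p + t *\<^sub>R (\<phi> p *\<^sub>R e)) p"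
    proof -
      note P1 = pert1[OF pU \<phi>, of _ t e] and P2 = pert2[OF pU \<phi>, of _ _ t e]
      have N': "cross3 (pd 1 (\<lambda>p. \<Phi> p + t *\<^sub>R (\<phi> p *\<^sub>R e)) p) (pd 2 (\<lambda>p. \<Phi> p + t *\<^sub>R (\<phi> p *\<^sub>R e)) p) \<noteq> 0"
        unfolding P1 using N unfolding X'_def Y'_def .
      show ?thesis unfolding sqA_jet[OF N'] area_def P1 P2 G_def X'_def Y'_def S'_def ..
    qed
  qed
  have "((\<lambda>t. EF F (\<lambda>p. \<Phi> p + t *\<^sub>R (\<phi> p *\<^sub>R e)) K) has_real_derivative
      integral K (\<lambda>p. GE F F' (Xv p) (Yv p) (SS p) (X' p) (Y' p) (S' p) 0)) (at 0)"
    by (rule has_field_derivative_transform_within_open[OF L, of "ball 0 \<delta>"]) (use \<delta>(1) eq in auto)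
  then show ?thesis unfolding X'_def Y'_def S'_def .
qed

lemma frame_data:
  assumes p: "p \<in> U"
  shows "SS p = (\<lambda>i j. ((SS p i j \<bullet> Xv p) / Ev p) *\<^sub>R Xv p + ((SS p i j \<bullet> Yv p) / Ev p) *\<^sub>R Yv p
           + (SS p i j \<bullet> frame.nv (Xv p) (Yv p) (Ev p)) *\<^sub>R frame.nv (Xv p) (Yv p) (Ev p))"
    and "(SS p 2 1 \<bullet> Xv p) / Ev p = (SS p 1 2 \<bullet> Xv p) / Ev p"
    and "(SS p 2 2 \<bullet> Xv p) / Ev p = - ((SS p 1 1 \<bullet> Xv p) / Ev p)"
    and "(SS p 1 1 \<bullet> Yv p) / Ev p = - ((SS p 1 2 \<bullet> Xv p) / Ev p)"
    and "(SS p 1 2 \<bullet> Yv p) / Ev p = (SS p 1 1 \<bullet> Xv p) / Ev p"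
    and "(SS p 2 1 \<bullet> Yv p) / Ev p = (SS p 1 1 \<bullet> Xv p) / Ev p"
    and "(SS p 2 2 \<bullet> Yv p) / Ev p = (SS p 1 2 \<bullet> Xv p) / Ev p"
    and "SS p 2 1 \<bullet> frame.nv (Xv p) (Yv p) (Ev p) = SS p 1 2 \<bullet> frame.nv (Xv p) (Yv p) (Ev p)"
proof -
  have s: "SS p 1 2 = SS p 2 1" using sym2[OF p] .
  have a1: "SS p 1 1 \<bullet> Xv p = SS p 1 2 \<bullet> Yv p" and a2: "SS p 2 1 \<bullet> Xv p = SS p 2 2 \<bullet> Yv p"
    using rel_a[OF p] by auto
  have b1: "SS p 1 1 \<bullet> Yv p + Xv p \<bullet> SS p 1 2 = 0" and b2: "SS p 2 1 \<bullet> Yv p + Xv p \<bullet> SS p 2 2 = 0"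
    using rel_b[OF p] by auto
  show "SS p = (\<lambda>i j. ((SS p i j \<bullet> Xv p) / Ev p) *\<^sub>R Xv p + ((SS p i j \<bullet> Yv p) / Ev p) *\<^sub>R Yv p
           + (SS p i j \<bullet> frame.nv (Xv p) (Yv p) (Ev p)) *\<^sub>R frame.nv (Xv p) (Yv p) (Ev p))"
    using frame.decomp[OF fr[OF p]] by (intro ext) blast
  show "(SS p 2 1 \<bullet> Xv p) / Ev p = (SS p 1 2 \<bullet> Xv p) / Ev p" using s by simp
  have x: "SS p 2 1 \<bullet> Yv p + SS p 2 2 \<bullet> Xv p = 0" using b2 by (simp add: inner_commute)
  have y: "SS p 2 1 \<bullet> Yv p = SS p 1 1 \<bullet> Xv p" using a1 s by simp
  have "SS p 2 2 \<bullet> Xv p = - (SS p 1 1 \<bullet> Xv p)" using x y by linarith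
  then show "(SS p 2 2 \<bullet> Xv p) / Ev p = - ((SS p 1 1 \<bullet> Xv p) / Ev p)" by simp
  have "SS p 1 1 \<bullet> Yv p = - (SS p 1 2 \<bullet> Xv p)" using b1 by (simp add: inner_commute eq_neg_iff_add_eq_0)
  then show "(SS p 1 1 \<bullet> Yv p) / Ev p = - ((SS p 1 2 \<bullet> Xv p) / Ev p)" by simp
  show "(SS p 1 2 \<bullet> Yv p) / Ev p = (SS p 1 1 \<bullet> Xv p) / Ev p" using a1 by simp
  show "(SS p 2 1 \<bullet> Yv p) / Ev p = (SS p 1 1 \<bullet> Xv p) / Ev p" using a1 s by simp
  show "(SS p 2 2 \<bullet> Yv p) / Ev p = (SS p 1 2 \<bullet> Xv p) / Ev p" using a2 s by simp
  show "SS p 2 1 \<bullet> frame.nv (Xv p) (Yv p) (Ev p) = SS p 1 2 \<bullet> frame.nv (Xv p) (Yv p) (Ev p)" using s by simp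
qed

lemma solve_lin: "2 * D * E = Q \<Longrightarrow> E \<noteq> 0 \<Longrightarrow> D = Q / (2 * E)" for D E Q :: real
  by (simp add: field_simps)

lemma GW0:
  fixes \<phi> :: "real^2 \<Rightarrow> real"
  assumes p: "p \<in> U"
  shows "GW F F' (Xv p) (Yv p) (SS p) (pd 1 \<phi> p *\<^sub>R e) (pd 2 \<phi> p *\<^sub>R e) (\<lambda>i j. pd i (pd j \<phi>) p *\<^sub>R e) 0
    = F ((mcurv \<Phi> p)\<^sup>2) * (Xv p \<bullet> e * pd 1 \<phi> p + Yv p \<bullet> e * pd 2 \<phi> p)
      + mcurv \<Phi> p * F' ((mcurv \<Phi> p)\<^sup>2) * (nn p \<bullet> e * (pd 1 (pd 1 \<phi>) p + pd 2 (pd 2 \<phi>) p)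
          + 2 * (pd 1 nn p \<bullet> e * pd 1 \<phi> p + pd 2 nn p \<bullet> e * pd 2 \<phi> p))"
proof -
  interpret Fr: frame "Xv p" "Yv p" "Ev p" using fr[OF p] .
  have H0: "Hs (Xv p \<bullet> Xv p) (Xv p \<bullet> Yv p) (Yv p \<bullet> Yv p) (SS p 1 1 \<bullet> cross3 (Xv p) (Yv p))
     (SS p 1 2 \<bullet> cross3 (Xv p) (Yv p)) (SS p 2 1 \<bullet> cross3 (Xv p) (Yv p)) (SS p 2 2 \<bullet> cross3 (Xv p) (Yv p))
     (norm (cross3 (Xv p) (Yv p))) = mcurv \<Phi> p"
    using mcurv_jet[OF N_nz[OF p]] by (simp add: Hj_Hs)
  have e: "e = ((e \<bullet> Xv p) / Ev p) *\<^sub>R Xv p + ((e \<bullet> Yv p) / Ev p) *\<^sub>R Yv p + (e \<bullet> Fr.nv) *\<^sub>R Fr.nv"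
    by (rule Fr.decomp)
  note hp = Fr.Hprime[OF e frame_data(1)[OF p] frame_data(2-8)[OF p], of "pd 1 \<phi> p" "pd 2 \<phi> p" "\<lambda>i j. pd i (pd j \<phi>) p"]
  note rp = Fr.rprime[OF e, of "pd 2 \<phi> p" "pd 1 \<phi> p"]
  have nE: "norm (cross3 (Xv p) (Yv p)) = Ev p" by (rule Fr.normN)
  have E0: "Ev p \<noteq> 0" by simp
  note hp2 = solve_lin[OF hp E0]
  show ?thesis
    unfolding GW_def Let_def scaleR_zero_left add_0_right H0 hp2
    unfolding rp
    unfolding nE n_nv[OF p] dn[OF p]
    using Fr.Epos by (simp add: field_simps)
qed

end


lemma pd_zero_outside:
  assumes "compact K" "p \<notin> K" "\<And>q. q \<notin> K \<Longrightarrow> g q = 0"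
  shows "pd i g p = 0"
proof -
  have "open (- K)" using assms(1) compact_imp_closed by blast
  then have "pd i g p = pd i (\<lambda>q. 0) p" by (rule pd_local) (use assms in auto)
  then show ?thesis by (simp add: pd_const)
qed

context cim begin

lemma divW_comp:
  assumes F: "\<And>s. (F has_real_derivative F' s) (at s)" and F'c: "continuous_on UNIV F'"
    and \<phi>: "smooth_on UNIV \<phi>" and K: "compact K" "K \<subseteq> U" and \<phi>0: "\<And>p. p \<notin> K \<Longrightarrow> \<phi> p = 0"
  shows "div_W U F F' \<Phi> \<phi> $ c = - integral K (\<lambda>p.
      F ((mcurv \<Phi> p)\<^sup>2) * (Xv p \<bullet> axis c 1 * pd 1 \<phi> p + Yv p \<bullet> axis c 1 * pd 2 \<phi> p)
      + mcurv \<Phi> p * F' ((mcurv \<Phi> p)\<^sup>2) * (nn p \<bullet> axis c 1 * (pd 1 (pd 1 \<phi>) p + pd 2 (pd 2 \<phi>) p)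
          + 2 * (pd 1 nn p \<bullet> axis c 1 * pd 1 \<phi> p + pd 2 nn p \<bullet> axis c 1 * pd 2 \<phi> p)))"
proof -
  define Hm where "Hm = mcurv \<Phi>"
  define fm where "fm p = Hm p * F' ((Hm p)\<^sup>2)" for p
  have cF: "continuous_on UNIV F" using F by (meson DERIV_isCont continuous_at_imp_continuous_on)
  have cHm: "continuous_on U Hm" unfolding Hm_def by (rule cont_mcurv)
  have cfm: "continuous_on U fm" unfolding fm_def by (intro continuous_intros cont_comp_UNIV[OF F'c] cHm)
  have cFH: "continuous_on U (\<lambda>p. F ((Hm p)\<^sup>2))" by (intro continuous_intros cont_comp_UNIV[OF cF] cHm)
  have d\<phi>: "\<And>p. (pd i \<phi>) differentiable at p" for i using smooth_diff[OF smooth_pd[OF \<phi>]] by simp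
  have c\<phi>1: "continuous_on UNIV (pd i \<phi>)" for i using smooth_cont[OF smooth_pd[OF \<phi>]] .
  have c\<phi>2: "continuous_on UNIV (pd i (pd j \<phi>))" for i j using smooth_cont[OF smooth_pd[OF smooth_pd[OF \<phi>]]] .
  have z1: "pd i \<phi> p = 0" if "p \<notin> K" for i p using pd_zero_outside[OF K(1) that \<phi>0] .
  have z2: "pd j (pd i \<phi>) p = 0" if "p \<notin> K" for i j p using pd_zero_outside[OF K(1) that z1] .
  have KU: "\<And>p. p \<in> K \<Longrightarrow> p \<in> U" using K(2) by auto
  define T where "T i p = pd i \<phi> p * (F ((Hm p)\<^sup>2) * (pd i \<Phi> p $ c) + fm p * (pd i nn p $ c))
      + (nn p $ c * pd i (pd i \<phi>) p + pd i nn p $ c * pd i \<phi> p) * fm p" for i p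
  have comp: "dpd i (\<lambda>\<psi>. regd U (\<lambda>p. F ((Hm p)\<^sup>2) *\<^sub>R pd i \<Phi> p + fm p *\<^sub>R pd i nn p) \<psi>
        - vmul nn (dpd i (regd U fm)) \<psi>) \<phi> $ c = - integral K (T i)" for i
  proof -
    define g1 where "g1 p = pd i \<phi> p *\<^sub>R (F ((Hm p)\<^sup>2) *\<^sub>R pd i \<Phi> p + fm p *\<^sub>R pd i nn p)" for p
    define g2 where "g2 p = pd i (\<lambda>q. nn q $ c * pd i \<phi> q) p * fm p" for p
    have g2U: "g2 p = (nn p $ c * pd i (pd i \<phi>) p + pd i nn p $ c * pd i \<phi> p) * fm p" if "p \<in> U" for p
      unfolding g2_def using pd_mult[OF diff_component[OF n_diff[OF that]] d\<phi>, of i c]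
        pd_component[OF n_diff[OF that]] by simp
    have cg1: "continuous_on K g1" unfolding g1_def
      by (intro continuous_intros continuous_on_subset[OF c\<phi>1] continuous_on_subset[OF cFH]
          continuous_on_subset[OF c1] continuous_on_subset[OF cfm] continuous_on_subset[OF cont_dn] K(2)) auto
    have cg2: "continuous_on K g2"
    proof -
      have "continuous_on K (\<lambda>p. (nn p $ c * pd i (pd i \<phi>) p + pd i nn p $ c * pd i \<phi> p) * fm p)"
        by (intro continuous_intros continuous_on_subset[OF c\<phi>1] continuous_on_subset[OF c\<phi>2]
          continuous_on_subset[OF cont_n] continuous_on_subset[OF cfm] continuous_on_subset[OF cont_dn] K(2)) auto
      then show ?thesis using g2U KU by (metis (no_types, lifting) continuous_on_cong)
    qed
    have g10: "g1 p = 0" if "p \<notin> K" for p using z1[OF that] by (simp add: g1_def)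
    have g20: "g2 p = 0" if "p \<notin> K" for p
      unfolding g2_def using pd_zero_outside[OF K(1) that, of "\<lambda>q. nn q $ c * pd i \<phi> q"] z1 by simp
    note I1 = int_superset[OF K cg1 g10] and I2 = int_superset[OF K cg2 g20]
    have cg1c: "continuous_on K (\<lambda>p. g1 p $ c)" using cg1 by (intro continuous_intros)
    have I1c: "integral U g1 $ c = integral K (\<lambda>p. g1 p $ c)"
      using integral_component_eq_cart[OF I1(1), of c] I1(2) int_superset[OF K cg1c] g10 by simp
    have "dpd i (\<lambda>\<psi>. regd U (\<lambda>p. F ((Hm p)\<^sup>2) *\<^sub>R pd i \<Phi> p + fm p *\<^sub>R pd i nn p) \<psi>
        - vmul nn (dpd i (regd U fm)) \<psi>) \<phi> $ c = - (integral U g1 $ c + integral U g2)"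
      by (simp add: dpd_def regd_def vmul_def g1_def[abs_def] g2_def[abs_def])
    also have "\<dots> = - (integral K (\<lambda>p. g1 p $ c) + integral K g2)" using I1c I2(2) by simp
    also have "\<dots> = - integral K (\<lambda>p. g1 p $ c + g2 p)"
      using integral_add[OF cont_int[OF K(1) cg1c] cont_int[OF K(1) cg2]] by simp
    also have "\<dots> = - integral K (T i)"
      by (intro arg_cong[where f=uminus] integral_cong) (simp add: g1_def g2U KU T_def algebra_simps)
    finally show ?thesis .
  qed
  have cT: "continuous_on K (T i)" for i unfolding T_def
    by (intro continuous_intros continuous_on_subset[OF c\<phi>1] continuous_on_subset[OF c\<phi>2]
        continuous_on_subset[OF cont_n] continuous_on_subset[OF cfm] continuous_on_subset[OF cont_dn]
        continuous_on_subset[OF cFH] continuous_on_subset[OF c1] K(2)) auto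
  have "div_W U F F' \<Phi> \<phi> $ c = (\<Sum>i\<in>UNIV. dpd i (\<lambda>\<psi>. regd U (\<lambda>p. F ((Hm p)\<^sup>2) *\<^sub>R pd i \<Phi> p + fm p *\<^sub>R pd i nn p) \<psi>
        - vmul nn (dpd i (regd U fm)) \<psi>) \<phi> $ c)"
    unfolding div_W_def Let_def Hm_def fm_def[abs_def] by simp
  also have "\<dots> = (\<Sum>i\<in>UNIV. - integral K (T i))" using comp by simp
  also have "\<dots> = - integral K (\<lambda>p. T 1 p + T 2 p)"
    using integral_add[OF cont_int[OF K(1) cT] cont_int[OF K(1) cT]] by (simp add: sum_2)
  also have "\<dots> = - integral K (\<lambda>p.
      F ((mcurv \<Phi> p)\<^sup>2) * (Xv p \<bullet> axis c 1 * pd 1 \<phi> p + Yv p \<bullet> axis c 1 * pd 2 \<phi> p)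
      + mcurv \<Phi> p * F' ((mcurv \<Phi> p)\<^sup>2) * (nn p \<bullet> axis c 1 * (pd 1 (pd 1 \<phi>) p + pd 2 (pd 2 \<phi>) p)
          + 2 * (pd 1 nn p \<bullet> axis c 1 * pd 1 \<phi> p + pd 2 nn p \<bullet> axis c 1 * pd 2 \<phi> p)))"
    by (intro arg_cong[where f=uminus] integral_cong) (simp add: T_def fm_def Hm_def inner_axis algebra_simps)
  finally show ?thesis .
qed

end


context frame begin

lemma Aprime:
  fixes ph :: "2 \<Rightarrow> 2 \<Rightarrow> real"
  assumes e: "e = ex *\<^sub>R X + ey *\<^sub>R Y + ez *\<^sub>R nv"
    and S: "S = (\<lambda>i j. sx i j *\<^sub>R X + sy i j *\<^sub>R Y + sz i j *\<^sub>R nv)"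
    and rel: "sx 2 1 = sx 1 2" "sx 2 2 = - sx 1 1" "sy 1 1 = - sx 1 2" "sy 1 2 = sx 1 1"
      "sy 2 1 = sx 1 1" "sy 2 2 = sx 1 2" "sz 2 1 = sz 1 2"
    and phs: "ph 2 1 = ph 1 2"
  shows "AsD (X \<bullet> X) (X \<bullet> Y) (Y \<bullet> Y) (\<lambda>i j. S i j \<bullet> cross3 X Y) (cross3 X Y \<bullet> cross3 X Y)
      (X \<bullet> (a1 *\<^sub>R e) + (a1 *\<^sub>R e) \<bullet> X) (X \<bullet> (a2 *\<^sub>R e) + (a1 *\<^sub>R e) \<bullet> Y) (Y \<bullet> (a2 *\<^sub>R e) + (a2 *\<^sub>R e) \<bullet> Y)
      (\<lambda>i j. S i j \<bullet> (cross3 X (a2 *\<^sub>R e) + cross3 (a1 *\<^sub>R e) Y) + (ph i j *\<^sub>R e) \<bullet> cross3 X Y)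
      (cross3 X Y \<bullet> (cross3 X (a2 *\<^sub>R e) + cross3 (a1 *\<^sub>R e) Y) + (cross3 X (a2 *\<^sub>R e) + cross3 (a1 *\<^sub>R e) Y) \<bullet> cross3 X Y)
     * E
    = (let V = (\<lambda>i::2. if i = 1 then X else Y); a = (\<lambda>i::2. if i = 1 then a1 else a2);
           dn = (\<lambda>k. - ((nv \<bullet> S k 1) / E) *\<^sub>R X - ((nv \<bullet> S k 2) / E) *\<^sub>R Y);
           chi = (\<lambda>i. (2 / E) * (nv \<bullet> e) * a i);
           dchi = (\<lambda>i k. 2 * (- (2 * (X \<bullet> S k 1)) / (E * E) * (nv \<bullet> e) * a i
                      + (1 / E) * ((dn k \<bullet> e) * a i + (nv \<bullet> e) * ph k i)))
       in (\<Sum>i\<in>UNIV. - (a i * (2 / E) * (\<Sum>j\<in>UNIV. (dn i \<bullet> dn j) * (V j \<bullet> e)))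
            - (\<Sum>k\<in>UNIV. chi i * (dn k \<bullet> S k i) + dchi i k * (dn k \<bullet> V i))))"
  using Epos unfolding AsD_def QsD_def Qs_def ad_def e S Let_def
  by (simp add: sum_2 fsimps rel phs) (simp add: field_simps power2_eq_square)

end

lemma solve_lin1: "D * E = Q \<Longrightarrow> E \<noteq> 0 \<Longrightarrow> D = Q / E" for D E Q :: real
  by (simp add: field_simps)

context cim begin

definition "R2 F F' \<phi> e p = (\<Sum>i\<in>UNIV. pd i \<phi> p * (F (sqA \<Phi> p) * (pd i \<Phi> p \<bullet> e)
      - (2 / Ev p) * F' (sqA \<Phi> p) * (\<Sum>j\<in>UNIV. (pd i nn p \<bullet> pd j nn p) * (pd j \<Phi> p \<bullet> e)))
    - F' (sqA \<Phi> p) * (\<Sum>k\<in>UNIV. ((2 / Ev p) * (nn p \<bullet> e) * pd i \<phi> p) * (pd k nn p \<bullet> SS p k i)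
        + (2 * (- (2 * (Xv p \<bullet> SS p k 1)) / (Ev p * Ev p) * (nn p \<bullet> e) * pd i \<phi> p
            + (1 / Ev p) * ((pd k nn p \<bullet> e) * pd i \<phi> p + (nn p \<bullet> e) * pd k (pd i \<phi>) p)))
          * (pd k nn p \<bullet> pd i \<Phi> p)))"

lemma GE0:
  fixes \<phi> :: "real^2 \<Rightarrow> real"
  assumes p: "p \<in> U" and \<phi>: "smooth_on UNIV \<phi>"
  shows "GE F F' (Xv p) (Yv p) (SS p) (pd 1 \<phi> p *\<^sub>R e) (pd 2 \<phi> p *\<^sub>R e) (\<lambda>i j. pd i (pd j \<phi>) p *\<^sub>R e) 0
    = R2 F F' \<phi> e p"
proof -
  interpret Fr: frame "Xv p" "Yv p" "Ev p" using fr[OF p] .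
  have A0: "As (Xv p \<bullet> Xv p) (Xv p \<bullet> Yv p) (Yv p \<bullet> Yv p) (\<lambda>i j. SS p i j \<bullet> cross3 (Xv p) (Yv p))
     (cross3 (Xv p) (Yv p) \<bullet> cross3 (Xv p) (Yv p)) = sqA \<Phi> p"
    using sqA_jet[OF N_nz[OF p]] by (simp add: Aj_As)
  have e: "e = ((e \<bullet> Xv p) / Ev p) *\<^sub>R Xv p + ((e \<bullet> Yv p) / Ev p) *\<^sub>R Yv p + (e \<bullet> Fr.nv) *\<^sub>R Fr.nv"
    by (rule Fr.decomp)
  have phs: "(\<lambda>i j. pd i (pd j \<phi>) p) 2 1 = (\<lambda>i j. pd i (pd j \<phi>) p) 1 2"
    using schwarz_scalar[OF \<phi>] by simp
  note ap = Fr.Aprime[OF e frame_data(1)[OF p] frame_data(2-8)[OF p] phs, of "pd 1 \<phi> p" "pd 2 \<phi> p"]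
  note rp = Fr.rprime[OF e, of "pd 2 \<phi> p" "pd 1 \<phi> p"]
  have nE: "norm (cross3 (Xv p) (Yv p)) = Ev p" by (rule Fr.normN)
  have E0: "Ev p \<noteq> 0" by simp
  note ap2 = solve_lin1[OF ap E0]
  show ?thesis
    unfolding GE_def Let_def scaleR_zero_left add_0_right A0 ap2
    unfolding rp
    unfolding nE R2_def n_nv[OF p] dn[OF p]
    using Fr.Epos by (simp add: field_simps sum_2)
qed

end


context cim begin

lemma unf:
  "dpd i (\<lambda>\<psi>. regd U (\<lambda>p. F (A2 p) *\<^sub>R pd i \<Phi> p
       - (2 * exp (-2 * lam p) * F' (A2 p)) *\<^sub>R (\<Sum>j\<in>UNIV. (pd i nn p \<bullet> pd j nn p) *\<^sub>R pd j \<Phi> p)) \<psi>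
     + vmul (\<lambda>p. (2 * exp (-2 * lam p)) *\<^sub>R nn p)
         (vdot (\<lambda>\<omega>. \<Sum>k\<in>UNIV. dpd k (regd U (\<lambda>p. F' (A2 p) *\<^sub>R pd k nn p)) \<omega>) (pd i \<Phi>)) \<psi>) \<phi> $ c
   = - (integral U (\<lambda>p. pd i \<phi> p *\<^sub>R (F (A2 p) *\<^sub>R pd i \<Phi> p
       - (2 * exp (-2 * lam p) * F' (A2 p)) *\<^sub>R (\<Sum>j\<in>UNIV. (pd i nn p \<bullet> pd j nn p) *\<^sub>R pd j \<Phi> p))) $ c
     - (\<Sum>d\<in>UNIV. \<Sum>k\<in>UNIV. integral U (\<lambda>p. pd k (\<lambda>q. pd i \<Phi> q $ d * (2 * exp (-2 * lam q) * nn q $ c * pd i \<phi> q)) p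
          *\<^sub>R (F' (A2 p) *\<^sub>R pd k nn p)) $ d))"
  by (simp add: dpd_def regd_def vmul_def vdot_def sum_negf)

lemma exp_m2: "exp (-2 * lam p) = 1 / Ev p"
  by (simp add: exp_minus field_simps)

lemma cont_expm: "continuous_on U (\<lambda>p. exp (-2 * lam p))"
proof -
  have "continuous_on U (\<lambda>p. 1 / Ev p)" by (intro continuous_intros cont_Ev) auto
  then show ?thesis unfolding exp_m2 .
qed

lemma sum3_inner: "(\<Sum>d\<in>UNIV. (a $ d * x + b $ d * y) * (f * v $ d)) = f * (x * (v \<bullet> a) + y * (v \<bullet> b))"
  for a b v :: "real^3"
  by (simp add: inner_vec_def sum_3 algebra_simps)

lemma divE_i:
  assumes F: "\<And>s. (F has_real_derivative F' s) (at s)" and F'c: "continuous_on UNIV F'"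
    and \<phi>: "smooth_on UNIV \<phi>" and K: "compact K" "K \<subseteq> U" and \<phi>0: "\<And>p. p \<notin> K \<Longrightarrow> \<phi> p = 0"
  shows "dpd i (\<lambda>\<psi>. regd U (\<lambda>p. F (sqA \<Phi> p) *\<^sub>R pd i \<Phi> p
       - (2 * exp (-2 * lam p) * F' (sqA \<Phi> p)) *\<^sub>R (\<Sum>j\<in>UNIV. (pd i nn p \<bullet> pd j nn p) *\<^sub>R pd j \<Phi> p)) \<psi>
     + vmul (\<lambda>p. (2 * exp (-2 * lam p)) *\<^sub>R nn p)
         (vdot (\<lambda>\<omega>. \<Sum>k\<in>UNIV. dpd k (regd U (\<lambda>p. F' (sqA \<Phi> p) *\<^sub>R pd k nn p)) \<omega>) (pd i \<Phi>)) \<psi>) \<phi> $ c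
   = - integral K (\<lambda>p. pd i \<phi> p * (F (sqA \<Phi> p) * (pd i \<Phi> p $ c)
      - (2 / Ev p) * F' (sqA \<Phi> p) * (\<Sum>j\<in>UNIV. (pd i nn p \<bullet> pd j nn p) * (pd j \<Phi> p $ c)))
    - F' (sqA \<Phi> p) * (\<Sum>k\<in>UNIV. ((2 / Ev p) * (nn p $ c) * pd i \<phi> p) * (pd k nn p \<bullet> SS p k i)
        + (2 * (- (2 * (Xv p \<bullet> SS p k 1)) / (Ev p * Ev p) * (nn p $ c) * pd i \<phi> p
            + (1 / Ev p) * ((pd k nn p $ c) * pd i \<phi> p + (nn p $ c) * pd k (pd i \<phi>) p)))
          * (pd k nn p \<bullet> pd i \<Phi> p)))"
proof -
  define A2 where "A2 = sqA \<Phi>"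
  have cF: "continuous_on UNIV F" using F by (meson DERIV_isCont continuous_at_imp_continuous_on)
  have cA: "continuous_on U A2" unfolding A2_def by (rule cont_sqA)
  have d\<phi>: "(pd i \<phi>) differentiable at p" for i p using smooth_diff[OF smooth_pd[OF \<phi>]] by simp
  have c\<phi>1: "continuous_on UNIV (pd i \<phi>)" for i using smooth_cont[OF smooth_pd[OF \<phi>]] .
  have c\<phi>2: "continuous_on UNIV (pd i (pd j \<phi>))" for i j using smooth_cont[OF smooth_pd[OF smooth_pd[OF \<phi>]]] .
  have z1: "pd i \<phi> p = 0" if "p \<notin> K" for i p using pd_zero_outside[OF K(1) that \<phi>0] .
  have KU: "\<And>p. p \<in> K \<Longrightarrow> p \<in> U" using K(2) by auto
  define g1 where "g1 p = pd i \<phi> p *\<^sub>R (F (A2 p) *\<^sub>R pd i \<Phi> p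
       - (2 * exp (-2 * lam p) * F' (A2 p)) *\<^sub>R (\<Sum>j\<in>UNIV. (pd i nn p \<bullet> pd j nn p) *\<^sub>R pd j \<Phi> p))" for p
  define h where "h d k p = pd k (\<lambda>q. pd i \<Phi> q $ d * (2 * exp (-2 * lam q) * nn q $ c * pd i \<phi> q)) p
          *\<^sub>R (F' (A2 p) *\<^sub>R pd k nn p)" for d k p
  define chi where "chi q = 2 / (Xv q \<bullet> Xv q) * (nn q $ c * pd i \<phi> q)" for q
  define dchi where "dchi k p = 2 * (- (2 * (Xv p \<bullet> SS p k 1)) / (Ev p * Ev p) * (nn p $ c) * pd i \<phi> p
            + (1 / Ev p) * ((pd k nn p $ c) * pd i \<phi> p + (nn p $ c) * pd k (pd i \<phi>) p))" for k p
  have dchi: "pd k chi p = dchi k p" if p: "p \<in> U" for k p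
  proof -
    have dXX: "(\<lambda>q. Xv q \<bullet> Xv q) differentiable at p" using d1[OF p] by simp
    have XX0: "Xv p \<bullet> Xv p \<noteq> 0" using XX[OF p] by simp
    have X0: "Xv p \<noteq> 0" using XX0 by auto
    have h1: "pd k (\<lambda>q. 2 / (Xv q \<bullet> Xv q)) p = (- 2 / (Xv p \<bullet> Xv p)^2) * pd k (\<lambda>q. Xv q \<bullet> Xv q) p"
      by (rule pd_comp[OF dXX]) (use X0 in \<open>auto intro!: derivative_eq_intros simp: XX0 power2_eq_square\<close>)
    have h2: "pd k (\<lambda>q. Xv q \<bullet> Xv q) p = 2 * (Xv p \<bullet> SS p k 1)"
      using pd_inner[OF d1[OF p] d1[OF p], of k] by (simp add: inner_commute)
    have dn': "(\<lambda>q. nn q $ c) differentiable at p" using diff_component[OF n_diff[OF p]] .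
    have h3: "pd k (\<lambda>q. nn q $ c * pd i \<phi> q) p = nn p $ c * pd k (pd i \<phi>) p + pd k nn p $ c * pd i \<phi> p"
      using pd_mult[OF dn' d\<phi>, of k] pd_component[OF n_diff[OF p]] by simp
    have d2X: "(\<lambda>q. 2 / (Xv q \<bullet> Xv q)) differentiable at p" using dXX XX0 by (auto intro!: derivative_intros)
    have "pd k chi p = 2 / (Xv p \<bullet> Xv p) * pd k (\<lambda>q. nn q $ c * pd i \<phi> q) p
        + pd k (\<lambda>q. 2 / (Xv q \<bullet> Xv q)) p * (nn p $ c * pd i \<phi> p)"
      unfolding chi_def by (rule pd_mult[OF d2X]) (intro differentiable_mult dn' d\<phi>)
    then show ?thesis unfolding h1 h2 h3 dchi_def using XX[OF p]
      by (simp add: field_simps power2_eq_square)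
  qed
  have cchi: "continuous_on U chi" unfolding chi_def using XX
    by (intro continuous_intros c1 cont_n c\<phi>1[THEN continuous_on_subset]) auto
  have cdchi: "continuous_on U (dchi k)" for k unfolding dchi_def
    by (intro continuous_intros c1 c2 cont_n cont_dn cont_Ev c\<phi>1[THEN continuous_on_subset]
        c\<phi>2[THEN continuous_on_subset]) auto
  have dchi_d: "chi differentiable at p" if p: "p \<in> U" for p
  proof -
    have X0: "Xv p \<bullet> Xv p \<noteq> 0" using XX[OF p] by simp
    show ?thesis unfolding chi_def using X0 diff_component[OF n_diff[OF p]] d1[OF p] d\<phi>
      by (intro differentiable_mult differentiable_divide differentiable_const) auto
  qed
  have pdh: "pd k (\<lambda>q. pd i \<Phi> q $ d * (2 * exp (-2 * lam q) * nn q $ c * pd i \<phi> q)) p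
      = SS p k i $ d * chi p + pd i \<Phi> p $ d * dchi k p" if p: "p \<in> U" for k d p
  proof -
    have "pd k (\<lambda>q. pd i \<Phi> q $ d * (2 * exp (-2 * lam q) * nn q $ c * pd i \<phi> q)) p
        = pd k (\<lambda>q. pd i \<Phi> q $ d * chi q) p"
      by (rule pd_local[OF U p]) (simp add: chi_def XX exp_minus field_simps)
    also have "\<dots> = pd i \<Phi> p $ d * pd k chi p + pd k (\<lambda>q. pd i \<Phi> q $ d) p * chi p"
      by (rule pd_mult[OF diff_component[OF d1[OF p]] dchi_d[OF p]])
    also have "\<dots> = SS p k i $ d * chi p + pd i \<Phi> p $ d * dchi k p"
      using pd_component[OF d1[OF p]] dchi[OF p] by simp
    finally show ?thesis .
  qed
  define sc where "sc d k p = pd k (\<lambda>q. pd i \<Phi> q $ d * (2 * exp (-2 * lam q) * nn q $ c * pd i \<phi> q)) p" for d k p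
  have csc: "continuous_on K (sc d k)" for d k
  proof -
    have "continuous_on U (\<lambda>p. SS p k i $ d * chi p + pd i \<Phi> p $ d * dchi k p)"
      by (intro continuous_intros c1 c2 cchi cdchi)
    then have "continuous_on K (\<lambda>p. SS p k i $ d * chi p + pd i \<Phi> p $ d * dchi k p)"
      using continuous_on_subset K(2) by blast
    then show ?thesis using pdh KU unfolding sc_def by (metis (no_types, lifting) continuous_on_cong)
  qed
  have sc0: "sc d k p = 0" if "p \<notin> K" for d k p
    unfolding sc_def by (rule pd_zero_outside[OF K(1) that]) (simp add: z1)
  have ch: "continuous_on K (h d k)" for d k
    unfolding h_def sc_def[symmetric]
    by (intro continuous_intros csc continuous_on_subset[OF cont_comp_UNIV[OF F'c cA] K(2)]
        continuous_on_subset[OF cont_dn K(2)])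
  have h0: "h d k p = 0" if "p \<notin> K" for d k p unfolding h_def sc_def[symmetric] using sc0[OF that] by simp
  have chd: "continuous_on K (\<lambda>p. h d k p $ d)" for d k using ch by (intro continuous_intros)
  have Ih: "integral U (h d k) $ d = integral K (\<lambda>p. h d k p $ d)" for d k
  proof -
    have a: "integral U (\<lambda>x. h d k x $ d) = integral U (h d k) $ d"
      by (rule integral_component_eq_cart[OF int_superset(1)[OF K ch h0]])
    have b: "integral U (\<lambda>p. h d k p $ d) = integral K (\<lambda>p. h d k p $ d)"
      by (rule int_superset(2)[OF K chd]) (simp add: h0)
    show ?thesis using a b by simp
  qed
  have cg1: "continuous_on K g1" unfolding g1_def
    by (intro continuous_intros continuous_on_subset[OF c\<phi>1] continuous_on_subset[OF cont_comp_UNIV[OF cF cA] K(2)]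
        continuous_on_subset[OF cont_comp_UNIV[OF F'c cA] K(2)] continuous_on_subset[OF cont_expm K(2)]
        continuous_on_subset[OF cont_dn K(2)] continuous_on_subset[OF c1 K(2)]) auto
  have g10: "g1 p = 0" if "p \<notin> K" for p unfolding g1_def using z1[OF that] by simp
  have cg1c: "continuous_on K (\<lambda>p. g1 p $ c)" using cg1 by (intro continuous_intros)
  have Ig: "integral U g1 $ c = integral K (\<lambda>p. g1 p $ c)"
    using integral_component_eq_cart[OF int_superset(1)[OF K cg1 g10], of c] int_superset(2)[OF K cg1c] g10 by simp
  have Isum: "(\<Sum>d\<in>UNIV. \<Sum>k\<in>UNIV. integral K (\<lambda>p. h d k p $ d)) = integral K (\<lambda>p. \<Sum>d\<in>UNIV. \<Sum>k\<in>UNIV. h d k p $ d)"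
  proof -
    have "(\<Sum>k\<in>UNIV. integral K (\<lambda>p. h d k p $ d)) = integral K (\<lambda>p. \<Sum>k\<in>UNIV. h d k p $ d)" for d
      by (rule integral_sum[symmetric]) (auto intro: cont_int[OF K(1) chd])
    moreover have "(\<lambda>p. \<Sum>k\<in>UNIV. h d k p $ d) integrable_on K" for d
      by (rule integrable_sum) (auto intro: cont_int[OF K(1) chd])
    ultimately show ?thesis by (simp add: integral_sum[symmetric])
  qed
  have Isumi: "(\<lambda>p. \<Sum>d\<in>UNIV. \<Sum>k\<in>UNIV. h d k p $ d) integrable_on K"
    by (intro integrable_sum) (auto intro: cont_int[OF K(1) chd])
  have pw: "g1 p $ c - (\<Sum>d\<in>UNIV. \<Sum>k\<in>UNIV. h d k p $ d) =
      pd i \<phi> p * (F (sqA \<Phi> p) * (pd i \<Phi> p $ c)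
      - (2 / Ev p) * F' (sqA \<Phi> p) * (\<Sum>j\<in>UNIV. (pd i nn p \<bullet> pd j nn p) * (pd j \<Phi> p $ c)))
    - F' (sqA \<Phi> p) * (\<Sum>k\<in>UNIV. ((2 / Ev p) * (nn p $ c) * pd i \<phi> p) * (pd k nn p \<bullet> SS p k i)
        + (2 * (- (2 * (Xv p \<bullet> SS p k 1)) / (Ev p * Ev p) * (nn p $ c) * pd i \<phi> p
            + (1 / Ev p) * ((pd k nn p $ c) * pd i \<phi> p + (nn p $ c) * pd k (pd i \<phi>) p)))
          * (pd k nn p \<bullet> pd i \<Phi> p))" if p: "p \<in> U" for p
  proof -
    have "(\<Sum>d\<in>UNIV. \<Sum>k\<in>UNIV. h d k p $ d) = (\<Sum>k\<in>UNIV. \<Sum>d\<in>UNIV. h d k p $ d)"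
      by (rule sum.swap)
    also have "\<dots> = (\<Sum>k\<in>UNIV. F' (A2 p) * (chi p * (pd k nn p \<bullet> SS p k i) + dchi k p * (pd k nn p \<bullet> pd i \<Phi> p)))"
      unfolding h_def using pdh[OF p] by (simp add: inner_vec_def sum_3 algebra_simps)
    finally have e1: "(\<Sum>d\<in>UNIV. \<Sum>k\<in>UNIV. h d k p $ d) =
        (\<Sum>k\<in>UNIV. F' (A2 p) * (chi p * (pd k nn p \<bullet> SS p k i) + dchi k p * (pd k nn p \<bullet> pd i \<Phi> p)))" .
    have e2: "g1 p $ c = pd i \<phi> p * (F (A2 p) * (pd i \<Phi> p $ c)
      - (2 / Ev p) * F' (A2 p) * (\<Sum>j\<in>UNIV. (pd i nn p \<bullet> pd j nn p) * (pd j \<Phi> p $ c)))"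
      unfolding g1_def by (simp add: exp_minus sum_distrib_left field_simps)
    show ?thesis unfolding e1 e2 A2_def chi_def dchi_def XX[OF p]
      by (simp add: sum_distrib_left algebra_simps)
  qed
  have "dpd i (\<lambda>\<psi>. regd U (\<lambda>p. F (sqA \<Phi> p) *\<^sub>R pd i \<Phi> p
       - (2 * exp (-2 * lam p) * F' (sqA \<Phi> p)) *\<^sub>R (\<Sum>j\<in>UNIV. (pd i nn p \<bullet> pd j nn p) *\<^sub>R pd j \<Phi> p)) \<psi>
     + vmul (\<lambda>p. (2 * exp (-2 * lam p)) *\<^sub>R nn p)
         (vdot (\<lambda>\<omega>. \<Sum>k\<in>UNIV. dpd k (regd U (\<lambda>p. F' (sqA \<Phi> p) *\<^sub>R pd k nn p)) \<omega>) (pd i \<Phi>)) \<psi>) \<phi> $ c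
    = - (integral U g1 $ c - (\<Sum>d\<in>UNIV. \<Sum>k\<in>UNIV. integral U (h d k) $ d))"
    unfolding g1_def[abs_def] h_def[abs_def] A2_def by (rule unf)
  also have "\<dots> = - (integral K (\<lambda>p. g1 p $ c) - integral K (\<lambda>p. \<Sum>d\<in>UNIV. \<Sum>k\<in>UNIV. h d k p $ d))"
    unfolding Ig Ih Isum ..
  also have "\<dots> = - integral K (\<lambda>p. g1 p $ c - (\<Sum>d\<in>UNIV. \<Sum>k\<in>UNIV. h d k p $ d))"
    using integral_diff[OF cont_int[OF K(1) cg1c] Isumi] by simp
  also have "\<dots> = - integral K (\<lambda>p. pd i \<phi> p * (F (sqA \<Phi> p) * (pd i \<Phi> p $ c)
      - (2 / Ev p) * F' (sqA \<Phi> p) * (\<Sum>j\<in>UNIV. (pd i nn p \<bullet> pd j nn p) * (pd j \<Phi> p $ c)))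
    - F' (sqA \<Phi> p) * (\<Sum>k\<in>UNIV. ((2 / Ev p) * (nn p $ c) * pd i \<phi> p) * (pd k nn p \<bullet> SS p k i)
        + (2 * (- (2 * (Xv p \<bullet> SS p k 1)) / (Ev p * Ev p) * (nn p $ c) * pd i \<phi> p
            + (1 / Ev p) * ((pd k nn p $ c) * pd i \<phi> p + (nn p $ c) * pd k (pd i \<phi>) p)))
          * (pd k nn p \<bullet> pd i \<Phi> p)))"
    by (intro arg_cong[where f=uminus] integral_cong pw KU)
  finally show ?thesis .
qed

lemma divE_comp:
  assumes F: "\<And>s. (F has_real_derivative F' s) (at s)" and F'c: "continuous_on UNIV F'"
    and \<phi>: "smooth_on UNIV \<phi>" and K: "compact K" "K \<subseteq> U" and \<phi>0: "\<And>p. p \<notin> K \<Longrightarrow> \<phi> p = 0"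
  shows "div_E U F F' \<Phi> lam \<phi> $ c = - integral K (R2 F F' \<phi> (axis c 1))"
proof -
  define T where "T i = (\<lambda>p. pd i \<phi> p * (F (sqA \<Phi> p) * (pd i \<Phi> p $ c)
      - (2 / Ev p) * F' (sqA \<Phi> p) * (\<Sum>j\<in>UNIV. (pd i nn p \<bullet> pd j nn p) * (pd j \<Phi> p $ c)))
    - F' (sqA \<Phi> p) * (\<Sum>k\<in>UNIV. ((2 / Ev p) * (nn p $ c) * pd i \<phi> p) * (pd k nn p \<bullet> SS p k i)
        + (2 * (- (2 * (Xv p \<bullet> SS p k 1)) / (Ev p * Ev p) * (nn p $ c) * pd i \<phi> p
            + (1 / Ev p) * ((pd k nn p $ c) * pd i \<phi> p + (nn p $ c) * pd k (pd i \<phi>) p)))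
          * (pd k nn p \<bullet> pd i \<Phi> p)))" for i
  have cF: "continuous_on UNIV F" using F by (meson DERIV_isCont continuous_at_imp_continuous_on)
  have c\<phi>1: "continuous_on UNIV (pd i \<phi>)" for i using smooth_cont[OF smooth_pd[OF \<phi>]] .
  have c\<phi>2: "continuous_on UNIV (pd i (pd j \<phi>))" for i j using smooth_cont[OF smooth_pd[OF smooth_pd[OF \<phi>]]] .
  have cT: "continuous_on K (T i)" for i
  proof -
    have "continuous_on U (T i)" unfolding T_def
      by (intro cont_Ev c1 c2 cont_n cont_dn cont_comp_UNIV[OF cF cont_sqA]
          cont_comp_UNIV[OF F'c cont_sqA] c\<phi>1[THEN continuous_on_subset] c\<phi>2[THEN continuous_on_subset]
          continuous_intros) auto
    then show ?thesis using continuous_on_subset K(2) by blast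
  qed
  have "div_E U F F' \<Phi> lam \<phi> $ c = (\<Sum>i\<in>UNIV. - integral K (T i))"
    unfolding div_E_def Let_def sum_component T_def using divE_i[OF F F'c \<phi> K \<phi>0] by simp
  also have "\<dots> = - integral K (\<lambda>p. T 1 p + T 2 p)"
    using integral_add[OF cont_int[OF K(1) cT] cont_int[OF K(1) cT]] by (simp add: sum_2)
  also have "\<dots> = - integral K (R2 F F' \<phi> (axis c 1))"
    by (intro arg_cong[where f=uminus] integral_cong) (simp add: T_def R2_def sum_2 inner_axis algebra_simps)
  finally show ?thesis .
qed

end


context cim begin

lemma part1:
  assumes F: "\<And>s. (F has_real_derivative F' s) (at s)" and F'c: "continuous_on UNIV F'"
    and crit: "critical (WF F) U \<Phi>" and tf: "test_fn U \<phi>"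
  shows "div_W U F F' \<Phi> \<phi> = 0"
proof -
  obtain K where K: "compact K" "K \<subseteq> U" and \<phi>0: "\<And>p. p \<notin> K \<Longrightarrow> \<phi> p = 0" and \<phi>: "smooth_on UNIV \<phi>"
    using tf unfolding test_fn_def by blast
  have "div_W U F F' \<Phi> \<phi> $ c = 0" for c
  proof -
    define e :: "real^3" where "e = axis c 1"
    have sw: "smooth_on UNIV (\<lambda>p. \<phi> p *\<^sub>R e)" by (rule smooth_scaleR_const[OF \<phi>])
    have w0: "\<forall>p. p \<notin> K \<longrightarrow> \<phi> p *\<^sub>R e = 0" using \<phi>0 by simp
    have d0: "((\<lambda>t. WF F (\<lambda>p. \<Phi> p + t *\<^sub>R (\<phi> p *\<^sub>R e)) K) has_real_derivative 0) (at 0)"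
      using crit sw K w0 unfolding critical_def by blast
    have d1: "((\<lambda>t. WF F (\<lambda>p. \<Phi> p + t *\<^sub>R (\<phi> p *\<^sub>R e)) K) has_real_derivative
      integral K (\<lambda>p. GW F F' (Xv p) (Yv p) (SS p) (pd 1 \<phi> p *\<^sub>R e) (pd 2 \<phi> p *\<^sub>R e)
       (\<lambda>i j. pd i (pd j \<phi>) p *\<^sub>R e) 0)) (at 0)"
      by (rule W1[OF F F'c \<phi> K])
    have z: "integral K (\<lambda>p. GW F F' (Xv p) (Yv p) (SS p) (pd 1 \<phi> p *\<^sub>R e) (pd 2 \<phi> p *\<^sub>R e)
       (\<lambda>i j. pd i (pd j \<phi>) p *\<^sub>R e) 0) = 0"
      using DERIV_unique[OF d1 d0] .
    have "integral K (\<lambda>p. GW F F' (Xv p) (Yv p) (SS p) (pd 1 \<phi> p *\<^sub>R e) (pd 2 \<phi> p *\<^sub>R e)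
       (\<lambda>i j. pd i (pd j \<phi>) p *\<^sub>R e) 0) = integral K (\<lambda>p.
      F ((mcurv \<Phi> p)\<^sup>2) * (Xv p \<bullet> e * pd 1 \<phi> p + Yv p \<bullet> e * pd 2 \<phi> p)
      + mcurv \<Phi> p * F' ((mcurv \<Phi> p)\<^sup>2) * (nn p \<bullet> e * (pd 1 (pd 1 \<phi>) p + pd 2 (pd 2 \<phi>) p)
          + 2 * (pd 1 nn p \<bullet> e * pd 1 \<phi> p + pd 2 nn p \<bullet> e * pd 2 \<phi> p)))"
      using K(2) by (intro integral_cong GW0) auto
    then show ?thesis using divW_comp[OF F F'c \<phi> K \<phi>0, of c] z by (simp add: e_def)
  qed
  then show ?thesis by (simp add: vec_eq_iff)
qed

lemma part2:
  assumes F: "\<And>s. (F has_real_derivative F' s) (at s)" and F'c: "continuous_on UNIV F'"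
    and crit: "critical (EF F) U \<Phi>" and tf: "test_fn U \<phi>"
  shows "div_E U F F' \<Phi> lam \<phi> = 0"
proof -
  obtain K where K: "compact K" "K \<subseteq> U" and \<phi>0: "\<And>p. p \<notin> K \<Longrightarrow> \<phi> p = 0" and \<phi>: "smooth_on UNIV \<phi>"
    using tf unfolding test_fn_def by blast
  have "div_E U F F' \<Phi> lam \<phi> $ c = 0" for c
  proof -
    define e :: "real^3" where "e = axis c 1"
    have sw: "smooth_on UNIV (\<lambda>p. \<phi> p *\<^sub>R e)" by (rule smooth_scaleR_const[OF \<phi>])
    have w0: "\<forall>p. p \<notin> K \<longrightarrow> \<phi> p *\<^sub>R e = 0" using \<phi>0 by simp
    have d0: "((\<lambda>t. EF F (\<lambda>p. \<Phi> p + t *\<^sub>R (\<phi> p *\<^sub>R e)) K) has_real_derivative 0) (at 0)"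
      using crit sw K w0 unfolding critical_def by blast
    have d1: "((\<lambda>t. EF F (\<lambda>p. \<Phi> p + t *\<^sub>R (\<phi> p *\<^sub>R e)) K) has_real_derivative
      integral K (\<lambda>p. GE F F' (Xv p) (Yv p) (SS p) (pd 1 \<phi> p *\<^sub>R e) (pd 2 \<phi> p *\<^sub>R e)
       (\<lambda>i j. pd i (pd j \<phi>) p *\<^sub>R e) 0)) (at 0)"
      by (rule E1[OF F F'c \<phi> K])
    have z: "integral K (\<lambda>p. GE F F' (Xv p) (Yv p) (SS p) (pd 1 \<phi> p *\<^sub>R e) (pd 2 \<phi> p *\<^sub>R e)
       (\<lambda>i j. pd i (pd j \<phi>) p *\<^sub>R e) 0) = 0"
      using DERIV_unique[OF d1 d0] .
    have "integral K (\<lambda>p. GE F F' (Xv p) (Yv p) (SS p) (pd 1 \<phi> p *\<^sub>R e) (pd 2 \<phi> p *\<^sub>R e)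
       (\<lambda>i j. pd i (pd j \<phi>) p *\<^sub>R e) 0) = integral K (R2 F F' \<phi> e)"
      using K(2) by (intro integral_cong GE0 \<phi>) auto
    then show ?thesis using divE_comp[OF F F'c \<phi> K \<phi>0, of c] z by (simp add: e_def)
  qed
  then show ?thesis by (simp add: vec_eq_iff)
qed

end

theorem proposition2p1:
  fixes U :: "(real^2) set" and \<Phi> :: "real^2 \<Rightarrow> real^3" and lam :: "real^2 \<Rightarrow> real"
    and F F' :: "real \<Rightarrow> real"
  assumes "open U" and "connected U"
    and "\<And>s. (F has_real_derivative F' s) (at s)" and "continuous_on UNIV F'"
    and "smooth_on U \<Phi>"
    and "\<And>p i j. p \<in> U \<Longrightarrow> pd i \<Phi> p \<bullet> pd j \<Phi> p = (if i = j then exp (2 * lam p) else 0)"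
  shows "(critical (WF F) U \<Phi> \<longrightarrow> (\<forall>\<phi>. test_fn U \<phi> \<longrightarrow> div_W U F F' \<Phi> \<phi> = 0))
       \<and> (critical (EF F) U \<Phi> \<longrightarrow> (\<forall>\<phi>. test_fn U \<phi> \<longrightarrow> div_E U F F' \<Phi> lam \<phi> = 0))"
proof -
  interpret cim U \<Phi> lam using assms(1,5,6) by unfold_locales auto
  show ?thesis
  proof (intro conjI impI allI)
    show "div_W U F F' \<Phi> \<phi> = 0" if "critical (WF F) U \<Phi>" "test_fn U \<phi>" for \<phi>
      using part1[OF assms(3,4) that] .
    show "div_E U F F' \<Phi> lam \<phi> = 0" if "critical (EF F) U \<Phi>" "test_fn U \<phi>" for \<phi>
      using part2[OF assms(3,4) that] .
  qed
qed


end
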